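(* Let $I\subset\mathbb R$ be a compact interval containing $0$ in its interior and consider the planar slow-fast system $$\dot x=\epsilon f(x,y,\epsilon),\qquad \dot y=y\,h(x,y,\epsilon),$$ with $f,h$ $C^\infty$-smooth, $\epsilon\ge 0$ small. Assume $x\,h(x,0,0)<0$ for all $x\in I\setminus\{0\}$ and $\frac{\partial h}{\partial x}(0,0,0)<0$. Then there exists a smooth $\epsilon$-family of coordinate changes which, in a neighbourhood of $I\times\{0\}\subset\mathbb R^2$ and up to multiplication of the vector field by a smooth positive function, brings the system into the form $$\dot x=\epsilon f_0(x,\epsilon)+y\,g_0(x,y,\epsilon),\qquad \dot y=-xy,$$ for some smooth functions $f_0,g_0$ with $g_0(0,0,0)=0$.
   Context: All functions are $C^\infty$. "Smooth $\epsilon$-family of coordinate changes" means a diffeomorphism in $(x,y)$ depending smoothly on the parameter $\epsilon$ for $\epsilon\ge0$ small. *)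

theory Defs
  imports "HOL-Analysis.Analysis"
begin

fun pdiff :: "'a::real_normed_vector list \<Rightarrow> ('a \<Rightarrow> real) \<Rightarrow> 'a \<Rightarrow> real" where
  "pdiff [] f = f"
| "pdiff (b # bs) f = (\<lambda>x. deriv (\<lambda>t. pdiff bs f (x + t *\<^sub>R b)) 0)"

definition smooth_on :: "'a::euclidean_space set \<Rightarrow> ('a \<Rightarrow> real) \<Rightarrow> bool" where
  "smooth_on S f \<longleftrightarrow> open S \<and>
     (\<forall>bs. set bs \<subseteq> Basis \<longrightarrow>
        continuous_on S (pdiff bs f) \<and>
        (\<forall>b\<in>Basis. \<forall>x\<in>S.
           ((\<lambda>t. pdiff bs f (x + t *\<^sub>R b)) has_real_derivative pdiff (b # bs) f x) (at 0)))"

definition smooth_map_on :: "'a::euclidean_space set \<Rightarrow> ('a \<Rightarrow> 'b::euclidean_space) \<Rightarrow> bool" where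
  "smooth_map_on S F \<longleftrightarrow> (\<forall>i\<in>Basis. smooth_on S (\<lambda>x. F x \<bullet> i))"

definition diffeo_on :: "'a::euclidean_space set \<Rightarrow> ('a \<Rightarrow> 'a) \<Rightarrow> bool" where
  "diffeo_on U \<Psi> \<longleftrightarrow> open U \<and> inj_on \<Psi> U \<and> open (\<Psi> ` U) \<and>
     smooth_map_on U \<Psi> \<and> smooth_map_on (\<Psi> ` U) (inv_into U \<Psi>)"

end

theory Submission
  imports Defs
begin

fun Ck :: "nat \<Rightarrow> 'a::euclidean_space set \<Rightarrow> ('a \<Rightarrow> real) \<Rightarrow> bool" where
  "Ck 0 S f = (open S \<and> continuous_on S f)"
| "Ck (Suc k) S f = (open S \<and> continuous_on S f \<and>
     (\<forall>b\<in>Basis. \<forall>x\<in>S. ((\<lambda>t. f (x + t *\<^sub>R b)) has_real_derivative pdiff [b] f x) (at 0)) \<and>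
     (\<forall>b\<in>Basis. Ck k S (pdiff [b] f)))"

lemma pdiff_append: "pdiff (bs @ cs) f = pdiff bs (pdiff cs f)"
  by (induction bs) auto

lemma Ck_list:
  "Ck k S f \<longleftrightarrow> open S \<and>
     (\<forall>bs. set bs \<subseteq> Basis \<and> length bs \<le> k \<longrightarrow> continuous_on S (pdiff bs f)) \<and>
     (\<forall>bs. set bs \<subseteq> Basis \<and> length bs < k \<longrightarrow>
        (\<forall>b\<in>Basis. \<forall>x\<in>S. ((\<lambda>t. pdiff bs f (x + t *\<^sub>R b)) has_real_derivative pdiff (b # bs) f x) (at 0)))"
proof (induction k arbitrary: f)
  case 0
  then show ?case by auto
next
  case (Suc k)
  show ?case
  proof
    assume H: "Ck (Suc k) S f"
    have IH: "\<And>b. b \<in> Basis \<Longrightarrow> Ck k S (pdiff [b] f)" using H by simp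
    show "open S \<and>
     (\<forall>bs. set bs \<subseteq> Basis \<and> length bs \<le> Suc k \<longrightarrow> continuous_on S (pdiff bs f)) \<and>
     (\<forall>bs. set bs \<subseteq> Basis \<and> length bs < Suc k \<longrightarrow>
        (\<forall>b\<in>Basis. \<forall>x\<in>S. ((\<lambda>t. pdiff bs f (x + t *\<^sub>R b)) has_real_derivative pdiff (b # bs) f x) (at 0)))"
    proof (intro conjI allI impI)
      show "open S" using H by simp
    next
      fix bs :: "'a list" assume A: "set bs \<subseteq> Basis \<and> length bs \<le> Suc k"
      show "continuous_on S (pdiff bs f)"
      proof (cases bs rule: rev_cases)
        case Nil then show ?thesis using H by simp
      next
        case (snoc ys y)
        then have "y \<in> Basis" "set ys \<subseteq> Basis" "length ys \<le> k" using A by auto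
        then show ?thesis using IH[of y] Suc.IH[of "pdiff [y] f"] snoc by (simp add: pdiff_append)
      qed
    next
      fix bs :: "'a list" assume A: "set bs \<subseteq> Basis \<and> length bs < Suc k"
      show "\<forall>b\<in>Basis. \<forall>x\<in>S. ((\<lambda>t. pdiff bs f (x + t *\<^sub>R b)) has_real_derivative pdiff (b # bs) f x) (at 0)"
      proof (cases bs rule: rev_cases)
        case Nil then show ?thesis using H by simp
      next
        case (snoc ys y)
        then have "y \<in> Basis" "set ys \<subseteq> Basis" "length ys < k" using A by auto
        then show ?thesis using IH[of y] Suc.IH[of "pdiff [y] f"] snoc
          by (simp add: pdiff_append flip: append_Cons)
      qed
    qed
  next
    assume H: "open S \<and>
     (\<forall>bs. set bs \<subseteq> Basis \<and> length bs \<le> Suc k \<longrightarrow> continuous_on S (pdiff bs f)) \<and>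
     (\<forall>bs. set bs \<subseteq> Basis \<and> length bs < Suc k \<longrightarrow>
        (\<forall>b\<in>Basis. \<forall>x\<in>S. ((\<lambda>t. pdiff bs f (x + t *\<^sub>R b)) has_real_derivative pdiff (b # bs) f x) (at 0)))"
    have c0: "continuous_on S f" using H[THEN conjunct2, THEN conjunct1, rule_format, of "[]"] by simp
    have d0: "\<forall>b\<in>Basis. \<forall>x\<in>S. ((\<lambda>t. f (x + t *\<^sub>R b)) has_real_derivative pdiff [b] f x) (at 0)"
      using H[THEN conjunct2, THEN conjunct2, rule_format, of "[]"] by simp
    have "Ck k S (pdiff [b] f)" if b: "b \<in> Basis" for b
    proof -
      have "open S" using H by simp
      moreover have "\<forall>bs. set bs \<subseteq> Basis \<and> length bs \<le> k \<longrightarrow> continuous_on S (pdiff bs (pdiff [b] f))"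
      proof (intro allI impI)
        fix bs :: "'a list" assume "set bs \<subseteq> Basis \<and> length bs \<le> k"
        then show "continuous_on S (pdiff bs (pdiff [b] f))"
          using H[THEN conjunct2, THEN conjunct1, rule_format, of "bs @ [b]"] b by (simp add: pdiff_append)
      qed
      moreover have "\<forall>bs. set bs \<subseteq> Basis \<and> length bs < k \<longrightarrow>
        (\<forall>c\<in>Basis. \<forall>x\<in>S. ((\<lambda>t. pdiff bs (pdiff [b] f) (x + t *\<^sub>R c)) has_real_derivative pdiff (c # bs) (pdiff [b] f) x) (at 0))"
      proof (intro allI impI)
        fix bs :: "'a list" assume "set bs \<subseteq> Basis \<and> length bs < k"
        then show "\<forall>c\<in>Basis. \<forall>x\<in>S. ((\<lambda>t. pdiff bs (pdiff [b] f) (x + t *\<^sub>R c)) has_real_derivative pdiff (c # bs) (pdiff [b] f) x) (at 0)"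
          using H[THEN conjunct2, THEN conjunct2, rule_format, of "bs @ [b]"] b
          by (simp add: pdiff_append flip: append_Cons)
      qed
      ultimately show ?thesis using Suc.IH by blast
    qed
    then show "Ck (Suc k) S f" using H c0 d0 by simp
  qed
qed

lemma smooth_on_Ck: "smooth_on S f \<longleftrightarrow> (\<forall>k. Ck k S f)"
proof
  assume "smooth_on S f" then show "\<forall>k. Ck k S f"
    unfolding smooth_on_def Ck_list by blast
next
  assume H: "\<forall>k. Ck k S f"
  show "smooth_on S f" unfolding smooth_on_def
  proof (intro conjI allI impI)
    show "open S" using H[rule_format, of 0] by simp
  next
    fix bs :: "'a list" assume A: "set bs \<subseteq> Basis"
    show "continuous_on S (pdiff bs f)" using H[rule_format, of "length bs"] A unfolding Ck_list by blast
    show "\<forall>b\<in>Basis. \<forall>x\<in>S. ((\<lambda>t. pdiff bs f (x + t *\<^sub>R b)) has_real_derivative pdiff (b # bs) f x) (at 0)"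
      using H[rule_format, of "Suc (length bs)"] A unfolding Ck_list by blast
  qed
qed

lemma Ck_open: "Ck k S f \<Longrightarrow> open S" by (cases k) auto
lemma Ck_cont: "Ck k S f \<Longrightarrow> continuous_on S f" by (cases k) auto

lemma Ck_Suc_mono: "Ck (Suc k) S f \<Longrightarrow> Ck k S f"
  by (induction k arbitrary: f) auto

lemma Ck_mono: "Ck k S f \<Longrightarrow> m \<le> k \<Longrightarrow> Ck m S f"
proof (induction k arbitrary: m)
  case 0 then show ?case by simp
next
  case (Suc k)
  then show ?case using Ck_Suc_mono[of k S f] by (metis le_Suc_eq)
qed

lemma Ck_subset: "Ck k S f \<Longrightarrow> T \<subseteq> S \<Longrightarrow> open T \<Longrightarrow> Ck k T f"
  by (induction k arbitrary: f) (auto intro: continuous_on_subset)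

lemma eventually_line_in_open:
  fixes x b :: "'a::real_normed_vector"
  assumes "open S" "x \<in> S"
  shows "eventually (\<lambda>t. x + t *\<^sub>R b \<in> S) (nhds (0::real))"
proof -
  have "open ((\<lambda>t::real. x + t *\<^sub>R b) -` S)"
    by (rule open_vimage[OF assms(1)]) (auto intro!: continuous_intros)
  moreover have "(0::real) \<in> (\<lambda>t::real. x + t *\<^sub>R b) -` S" using assms(2) by simp
  ultimately have "eventually (\<lambda>t. t \<in> (\<lambda>t::real. x + t *\<^sub>R b) -` S) (nhds (0::real))"
    by (rule eventually_nhds_in_open)
  then show ?thesis by simp
qed

lemma pdiff_local:
  assumes "open S" "\<forall>y\<in>S. f y = g y" "x \<in> S"
  shows "pdiff bs f x = pdiff bs g x"
  using assms(3)
proof (induction bs arbitrary: x)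
  case Nil then show ?case using assms by simp
next
  case (Cons b bs)
  have "eventually (\<lambda>t. x + t *\<^sub>R b \<in> S) (nhds (0::real))"
    using eventually_line_in_open[OF assms(1) Cons.prems] .
  then have "eventually (\<lambda>t. pdiff bs f (x + t *\<^sub>R b) = pdiff bs g (x + t *\<^sub>R b)) (nhds (0::real))"
    by eventually_elim (use Cons.IH in auto)
  then show ?case by (simp add: deriv_cong_ev)
qed

lemma Ck_cong:
  assumes "Ck k S f" "\<forall>x\<in>S. f x = g x"
  shows "Ck k S g"
  using assms
proof (induction k arbitrary: f g)
  case 0 then show ?case using continuous_on_cong by (metis Ck.simps(1))
next
  case (Suc k)
  have S: "open S" using Suc.prems by simp
  have pd: "\<And>b x. x \<in> S \<Longrightarrow> pdiff [b] f x = pdiff [b] g x"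
    using pdiff_local[OF S Suc.prems(2)] by blast
  have "continuous_on S g" using Suc.prems continuous_on_cong by (metis Ck.simps(2))
  moreover have "((\<lambda>t. g (x + t *\<^sub>R b)) has_real_derivative pdiff [b] g x) (at 0)"
    if "b \<in> Basis" "x \<in> S" for b x
  proof -
    have "eventually (\<lambda>t. x + t *\<^sub>R b \<in> S) (nhds (0::real))"
      using eventually_line_in_open[OF S that(2)] .
    then have ev: "eventually (\<lambda>t. f (x + t *\<^sub>R b) = g (x + t *\<^sub>R b)) (nhds (0::real))"
      by eventually_elim (use Suc.prems in auto)
    have "((\<lambda>t. f (x + t *\<^sub>R b)) has_real_derivative pdiff [b] f x) (at 0)"
      using Suc.prems that by simp
    then show ?thesis using DERIV_cong_ev[OF refl ev, of "pdiff [b] f x" "pdiff [b] g x"] pd[OF that(2)]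
      by simp
  qed
  moreover have "Ck k S (pdiff [b] g)" if "b \<in> Basis" for b
    using Suc.IH[of "pdiff [b] f" "pdiff [b] g"] Suc.prems that pd by auto
  ultimately show ?case using S by simp
qed

lemma CkI:
  assumes "open S" "continuous_on S F"
    and "\<And>b x. b \<in> Basis \<Longrightarrow> x \<in> S \<Longrightarrow> ((\<lambda>t. F (x + t *\<^sub>R b)) has_real_derivative D b x) (at 0)"
    and "\<And>b. b \<in> Basis \<Longrightarrow> Ck k S (D b)"
  shows "Ck (Suc k) S F"
proof -
  have pd: "\<forall>x\<in>S. D b x = pdiff [b] F x" if "b \<in> Basis" for b
  proof
    fix x assume "x \<in> S"
    show "D b x = pdiff [b] F x" using DERIV_imp_deriv[OF assms(3)[OF that \<open>x \<in> S\<close>]] by simp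
  qed
  have "Ck k S (pdiff [b] F)" if "b \<in> Basis" for b
    using Ck_cong[OF assms(4)[OF that] pd[OF that]] .
  moreover have "((\<lambda>t. F (x + t *\<^sub>R b)) has_real_derivative pdiff [b] F x) (at 0)" if "b \<in> Basis" "x \<in> S" for b x
    using assms(3)[OF that] pd[OF that(1)] that(2) by simp
  ultimately show ?thesis using assms(1,2) by (simp del: pdiff.simps)
qed

lemma Ck_D:
  assumes "Ck (Suc k) S F" "b \<in> Basis" "x \<in> S"
  shows "((\<lambda>t. F (x + t *\<^sub>R b)) has_real_derivative pdiff [b] F x) (at 0)"
  using assms by simp

lemma Ck_pdiff: "Ck (Suc k) S F \<Longrightarrow> b \<in> Basis \<Longrightarrow> Ck k S (pdiff [b] F)"
  by simp

lemma Ck_const: "open S \<Longrightarrow> Ck k S (\<lambda>x. c)"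
proof (induction k arbitrary: c)
  case 0 then show ?case by simp
next
  case (Suc k)
  show ?case
    by (rule CkI[where D="\<lambda>b x. 0"]) (auto simp: Suc intro!: derivative_eq_intros)
qed

lemma Ck_linear:
  fixes l :: "'a::euclidean_space \<Rightarrow> real"
  assumes "open S" "linear l"
  shows "Ck k S (\<lambda>x. l x + c)"
proof -
  have cl: "continuous_on S (\<lambda>x. l x + c)"
    by (intro continuous_on_add continuous_on_const linear_continuous_on) (simp add: assms(2) linear_conv_bounded_linear[symmetric])
  show ?thesis
proof (cases k)
  case 0 then show ?thesis using assms cl by simp
next
  case (Suc m)
  have "Ck (Suc m) S (\<lambda>x. l x + c)"
  proof (rule CkI[where D="\<lambda>b x. l b"])
    show "continuous_on S (\<lambda>x. l x + c)" by (rule cl)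
    fix b x :: 'a assume "b \<in> Basis" "x \<in> S"
    have e: "(\<lambda>t. l (x + t *\<^sub>R b) + c) = (\<lambda>t. l x + c + t * l b)"
      using assms(2) by (auto simp: linear_add linear_scale)
    show "((\<lambda>t. l (x + t *\<^sub>R b) + c) has_real_derivative l b) (at 0)"
      unfolding e by (auto intro!: derivative_eq_intros)
  qed (use assms Ck_const in auto)
  then show ?thesis using Suc by simp
qed
qed

lemma Ck_inner: "open S \<Longrightarrow> Ck k S (\<lambda>x. x \<bullet> i)"
  using Ck_linear[of S "\<lambda>x. x \<bullet> i" k 0] by (simp add: linear_iff inner_add_left)

lemma Ck_add:
  fixes f g :: "'a::euclidean_space \<Rightarrow> real"
  assumes "Ck k S f" "Ck k S g"
  shows "Ck k S (\<lambda>x. f x + g x)"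
  using assms
proof (induction k arbitrary: f g)
  case 0 then show ?case by (auto intro!: continuous_intros)
next
  case (Suc k)
  show ?case
  proof (rule CkI[where D="\<lambda>b x. pdiff [b] f x + pdiff [b] g x"])
    show "open S" using Suc by simp
    show "continuous_on S (\<lambda>x. f x + g x)" using Suc.prems by (auto intro!: continuous_intros dest: Ck_cont)
    fix b x :: 'a assume "b \<in> Basis" "x \<in> S"
    then show "((\<lambda>t. f (x + t *\<^sub>R b) + g (x + t *\<^sub>R b)) has_real_derivative pdiff [b] f x + pdiff [b] g x) (at 0)"
      using Suc.prems by (auto intro!: derivative_eq_intros simp del: pdiff.simps)
  next
    fix b :: 'a assume "b \<in> Basis"
    then show "Ck k S (\<lambda>x. pdiff [b] f x + pdiff [b] g x)"
      using Suc by (simp del: pdiff.simps)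
  qed
qed

lemma Ck_mult:
  fixes f g :: "'a::euclidean_space \<Rightarrow> real"
  assumes "Ck k S f" "Ck k S g"
  shows "Ck k S (\<lambda>x. f x * g x)"
  using assms
proof (induction k arbitrary: f g)
  case 0 then show ?case by (auto intro!: continuous_intros)
next
  case (Suc k)
  show ?case
  proof (rule CkI[where D="\<lambda>b x. pdiff [b] f x * g x + f x * pdiff [b] g x"])
    show "open S" using Suc by simp
    show "continuous_on S (\<lambda>x. f x * g x)" using Suc.prems by (auto intro!: continuous_intros dest: Ck_cont)
    fix b x :: 'a assume "b \<in> Basis" "x \<in> S"
    then show "((\<lambda>t. f (x + t *\<^sub>R b) * g (x + t *\<^sub>R b)) has_real_derivative pdiff [b] f x * g x + f x * pdiff [b] g x) (at 0)"
      using Suc.prems by (auto intro!: derivative_eq_intros simp del: pdiff.simps)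
  next
    fix b :: 'a assume b: "b \<in> Basis"
    have "Ck k S f" "Ck k S g" using Suc.prems Ck_Suc_mono by blast+
    then show "Ck k S (\<lambda>x. pdiff [b] f x * g x + f x * pdiff [b] g x)"
      using Suc b by (intro Ck_add) (simp_all del: pdiff.simps)
  qed
qed

lemma Ck_cmult: "Ck k S f \<Longrightarrow> Ck k S (\<lambda>x. c * f x)"
  using Ck_mult[OF Ck_const[OF Ck_open]] by blast

lemma Ck_uminus: "Ck k S f \<Longrightarrow> Ck k S (\<lambda>x. - f x)"
  using Ck_cmult[of k S f "-1"] by simp

lemma Ck_diff: "Ck k S f \<Longrightarrow> Ck k S g \<Longrightarrow> Ck k S (\<lambda>x. f x - g x)"
  using Ck_add[OF _ Ck_uminus] by fastforce

lemma Ck_sum: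
  assumes "finite I" "open S" "\<And>i. i \<in> I \<Longrightarrow> Ck k S (F i)"
  shows "Ck k S (\<lambda>x. \<Sum>i\<in>I. F i x)"
  using assms by (induction I rule: finite_induct) (auto intro!: Ck_add Ck_const)

lemma Ck_power: "Ck k S f \<Longrightarrow> Ck k S (\<lambda>x. f x ^ n)"
  by (induction n) (auto intro!: Ck_mult Ck_const dest: Ck_open)

lemma deriv_shift0:
  fixes g :: "real \<Rightarrow> real"
  assumes "(g has_real_derivative D) (at 0)"
  shows "((\<lambda>s. g (s - t)) has_real_derivative D) (at t)"
proof -
  have "(g has_real_derivative D) (at (t + (- t)))" using assms by simp
  then show ?thesis using DERIV_shift[of g D t "-t"] by simp
qed

lemma partials_frechet:
  fixes f :: "'a::euclidean_space \<Rightarrow> real"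
  assumes S: "open S" "x \<in> S"
    and D: "\<And>b y. b \<in> Basis \<Longrightarrow> y \<in> S \<Longrightarrow> ((\<lambda>t. f (y + t *\<^sub>R b)) has_real_derivative D b y) (at 0)"
    and C: "\<And>b. b \<in> Basis \<Longrightarrow> continuous (at x) (D b)"
  shows "(f has_derivative (\<lambda>v. \<Sum>b\<in>Basis. (v \<bullet> b) * D b x)) (at x)"
  unfolding has_derivative_at_alt
proof (intro conjI allI impI)
  show "bounded_linear (\<lambda>v. \<Sum>b\<in>Basis. (v \<bullet> b) * D b x)"
    by (intro bounded_linear_sum) (auto intro!: bounded_linear_intros)
next
  fix e :: real assume e: "e > 0"
  define n where "n = real DIM('a)"
  have n: "n \<ge> 1" unfolding n_def using DIM_positive by (simp add: Suc_le_eq)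
  define e' where "e' = e / n"
  have e': "e' > 0" using e n by (simp add: e'_def)
  have "eventually (\<lambda>y. \<forall>b\<in>Basis. dist (D b y) (D b x) < e') (at x)"
    using C e' by (intro eventually_ball_finite) (auto simp: continuous_at tendsto_iff)
  then obtain d1 where d1: "d1 > 0" "\<And>y. y \<noteq> x \<Longrightarrow> dist y x < d1 \<Longrightarrow> \<forall>b\<in>Basis. dist (D b y) (D b x) < e'"
    unfolding eventually_at by blast
  obtain r where r: "r > 0" "ball x r \<subseteq> S" using S openE by blast
  define d0 where "d0 = min d1 r"
  have d0: "d0 > 0" using d1 r by (simp add: d0_def)
  have near: "y \<in> S \<and> (\<forall>b\<in>Basis. \<bar>D b y - D b x\<bar> \<le> e')" if "dist y x < d0" for y
  proof (cases "y = x")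
    case True then show ?thesis using S e' by simp
  next
    case False
    have "y \<in> S" using that r unfolding d0_def by (auto simp: dist_commute)
    moreover have "\<forall>b\<in>Basis. \<bar>D b y - D b x\<bar> \<le> e'"
      using d1(2)[OF False] that unfolding d0_def by (auto simp: dist_real_def less_imp_le)
    ultimately show ?thesis by blast
  qed
  define d where "d = d0 / n"
  have d: "d > 0" using d0 n by (simp add: d_def)
  have key: "\<forall>v. norm v < d \<longrightarrow> \<bar>f (x + (\<Sum>b\<in>B. (v \<bullet> b) *\<^sub>R b)) - f x - (\<Sum>b\<in>B. (v \<bullet> b) * D b x)\<bar>
              \<le> real (card B) * e' * norm v" if "B \<subseteq> Basis" for B
  proof -
    have "finite B" using that finite_subset finite_Basis by blast
    then show ?thesis using that
    proof (induction B rule: finite_induct)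
      case empty then show ?case by simp
    next
      case (insert c B)
      show ?case
      proof (intro allI impI)
        fix v :: 'a assume nv: "norm v < d"
        define w where "w = (\<Sum>b\<in>B. (v \<bullet> b) *\<^sub>R b)"
        define s where "s = v \<bullet> c"
        have cB: "c \<in> Basis" "B \<subseteq> Basis" using insert by auto
        have IH: "\<bar>f (x + w) - f x - (\<Sum>b\<in>B. (v \<bullet> b) * D b x)\<bar> \<le> real (card B) * e' * norm v"
          using insert.IH cB nv unfolding w_def by blast
        have abss: "\<bar>s\<bar> \<le> norm v" unfolding s_def using Basis_le_norm[OF cB(1)] .
        have nw: "norm w \<le> real (card B) * norm v"
        proof -
          have "norm w \<le> (\<Sum>b\<in>B. norm ((v \<bullet> b) *\<^sub>R b))" unfolding w_def by (rule norm_sum)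
          also have "\<dots> \<le> (\<Sum>b\<in>B. norm v)"
            using cB by (intro sum_mono) (auto simp: Basis_le_norm)
          finally show ?thesis by simp
        qed
        have cardle: "real (card B) + 1 \<le> n"
        proof -
          have "card (insert c B) \<le> card (Basis :: 'a set)" using insert cB by (intro card_mono) auto
          then show ?thesis using insert by (simp add: n_def)
        qed
        define T where "T = closed_segment 0 s"
        have inT: "\<bar>t\<bar> \<le> \<bar>s\<bar>" if "t \<in> T" for t
          using that unfolding T_def closed_segment_eq_real_ivl by (auto split: if_splits)
        have zt: "dist (x + w + t *\<^sub>R c) x < d0" if "t \<in> T" for t
        proof -
          have "dist (x + w + t *\<^sub>R c) x = norm (w + t *\<^sub>R c)" by (simp add: dist_norm)
          also have "\<dots> \<le> norm w + \<bar>t\<bar>" using norm_triangle_ineq[of w "t *\<^sub>R c"] cB by simp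
          also have "\<dots> \<le> real (card B) * norm v + norm v" using nw inT[OF that] abss by linarith
          also have "\<dots> = (real (card B) + 1) * norm v" by (simp add: algebra_simps)
          also have "\<dots> \<le> n * norm v" using cardle by (intro mult_right_mono) auto
          also have "\<dots> < n * d" using nv n by simp
          also have "\<dots> = d0" using n by (simp add: d_def)
          finally show ?thesis .
        qed
        define \<psi> where "\<psi> t = f (x + w + t *\<^sub>R c) - t * D c x" for t
        have dpsi: "(\<psi> has_field_derivative (D c (x + w + t *\<^sub>R c) - D c x)) (at t within T)" if "t \<in> T" for t
        proof -
          have zS: "x + w + t *\<^sub>R c \<in> S" using near[OF zt[OF that]] by blast
          have "((\<lambda>\<tau>. f ((x + w + t *\<^sub>R c) + \<tau> *\<^sub>R c)) has_real_derivative D c (x + w + t *\<^sub>R c)) (at 0)"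
            using D[OF cB(1) zS] .
          from deriv_shift0[OF this, of t]
          have "((\<lambda>s. f (x + w + s *\<^sub>R c)) has_real_derivative D c (x + w + t *\<^sub>R c)) (at t)"
            by (simp add: algebra_simps)
          then have "(\<psi> has_field_derivative (D c (x + w + t *\<^sub>R c) - D c x)) (at t)"
            unfolding \<psi>_def by (auto intro!: derivative_eq_intros)
          then show ?thesis by (rule has_field_derivative_at_within)
        qed
        have bnd: "norm (D c (x + w + t *\<^sub>R c) - D c x) \<le> e'" if "t \<in> T" for t
          using near[OF zt[OF that]] cB by auto
        have "norm (\<psi> s - \<psi> 0) \<le> e' * norm (s - 0)"
          by (rule field_differentiable_bound[OF _ dpsi bnd]) (auto simp: T_def)
        then have piece: "\<bar>f (x + w + s *\<^sub>R c) - f (x + w) - s * D c x\<bar> \<le> e' * norm v"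
          using abss e' unfolding \<psi>_def
          by (smt (verit, best) mult_left_mono real_norm_def scaleR_zero_left add_0_right mult_zero_left)
        have sumI: "(\<Sum>b\<in>insert c B. (v \<bullet> b) *\<^sub>R b) = w + s *\<^sub>R c"
          using insert unfolding w_def s_def by simp
        have sumD: "(\<Sum>b\<in>insert c B. (v \<bullet> b) * D b x) = s * D c x + (\<Sum>b\<in>B. (v \<bullet> b) * D b x)"
          using insert unfolding s_def by simp
        have "\<bar>f (x + (\<Sum>b\<in>insert c B. (v \<bullet> b) *\<^sub>R b)) - f x - (\<Sum>b\<in>insert c B. (v \<bullet> b) * D b x)\<bar>
            = \<bar>(f (x + w + s *\<^sub>R c) - f (x + w) - s * D c x) + (f (x + w) - f x - (\<Sum>b\<in>B. (v \<bullet> b) * D b x))\<bar>"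
          unfolding sumI sumD by (simp add: algebra_simps)
        also have "\<dots> \<le> e' * norm v + real (card B) * e' * norm v"
          using piece IH by linarith
        also have "\<dots> = real (card (insert c B)) * e' * norm v"
          using insert by (simp add: algebra_simps)
        finally show "\<bar>f (x + (\<Sum>b\<in>insert c B. (v \<bullet> b) *\<^sub>R b)) - f x - (\<Sum>b\<in>insert c B. (v \<bullet> b) * D b x)\<bar>
              \<le> real (card (insert c B)) * e' * norm v" .
      qed
    qed
  qed
  show "\<exists>d>0. \<forall>y. norm (y - x) < d \<longrightarrow>
      norm (f y - f x - (\<Sum>b\<in>Basis. ((y - x) \<bullet> b) * D b x)) \<le> e * norm (y - x)"
  proof (intro exI conjI allI impI)
    show "d > 0" by (rule d)
    fix y assume "norm (y - x) < d"
    from key[OF order_refl, rule_format, OF this]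
    have "\<bar>f (x + (y - x)) - f x - (\<Sum>b\<in>Basis. ((y - x) \<bullet> b) * D b x)\<bar> \<le> n * e' * norm (y - x)"
      by (simp add: euclidean_representation n_def)
    also have "n * e' = e" using n by (simp add: e'_def)
    finally show "norm (f y - f x - (\<Sum>b\<in>Basis. ((y - x) \<bullet> b) * D b x)) \<le> e * norm (y - x)" by simp
  qed
qed

lemma Ck_frechet:
  fixes f :: "'a::euclidean_space \<Rightarrow> real"
  assumes "Ck (Suc k) S f" "x \<in> S"
  shows "(f has_derivative (\<lambda>v. \<Sum>b\<in>Basis. (v \<bullet> b) * pdiff [b] f x)) (at x)"
proof (rule partials_frechet[where S=S])
  show "open S" using assms by simp
  show "x \<in> S" by fact
  fix b :: 'a assume b: "b \<in> Basis"
  show "\<And>y. y \<in> S \<Longrightarrow> ((\<lambda>t. f (y + t *\<^sub>R b)) has_real_derivative pdiff [b] f y) (at 0)"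
    using assms b by (simp del: pdiff.simps)
  have "continuous_on S (pdiff [b] f)" using Ck_cont[OF Ck_pdiff[OF assms(1) b]] .
  then show "continuous (at x) (pdiff [b] f)"
    using assms Ck_open continuous_on_eq_continuous_at by blast
qed

lemma vector_deriv_components:
  fixes G :: "'a::euclidean_space \<Rightarrow> 'b::euclidean_space"
  assumes "\<And>i. i \<in> Basis \<Longrightarrow> ((\<lambda>t. G (x + t *\<^sub>R c) \<bullet> i) has_real_derivative d i) (at 0)"
  shows "((\<lambda>t. G (x + t *\<^sub>R c)) has_vector_derivative (\<Sum>i\<in>Basis. d i *\<^sub>R i)) (at 0)"
proof -
  have e: "(\<lambda>t. G (x + t *\<^sub>R c)) = (\<lambda>t. \<Sum>i\<in>Basis. (G (x + t *\<^sub>R c) \<bullet> i) *\<^sub>R i)"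
    by (simp add: euclidean_representation)
  show ?thesis unfolding e
    by (intro has_vector_derivative_sum)
       (auto intro!: derivative_eq_intros assms simp: has_real_derivative_iff_has_vector_derivative[symmetric])
qed

lemma Ck_comp:
  fixes f :: "'b::euclidean_space \<Rightarrow> real" and G :: "'a::euclidean_space \<Rightarrow> 'b"
  assumes "Ck k S f" "\<forall>i\<in>Basis. Ck k T (\<lambda>x. G x \<bullet> i)" "G ` T \<subseteq> S" "open T"
  shows "Ck k T (\<lambda>x. f (G x))"
  using assms(1,2,3)
proof (induction k arbitrary: f G)
  case 0
  have "continuous_on T G" using 0 by (intro continuous_on_componentwise[THEN iffD2]) simp
  then have "continuous_on T (\<lambda>x. f (G x))"
    by (intro continuous_on_compose2[of S f T G, OF _ _ 0(3)]) (use 0 in auto)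
  then show ?case using assms(4) by simp
next
  case (Suc k)
  have contG: "continuous_on T G" using Suc.prems by (intro continuous_on_componentwise[THEN iffD2]) (auto dest: Ck_cont)
  show ?case
  proof (rule CkI[where D="\<lambda>c x. \<Sum>b\<in>Basis. pdiff [b] f (G x) * pdiff [c] (\<lambda>x. G x \<bullet> b) x"])
    show "open T" by fact
    show "continuous_on T (\<lambda>x. f (G x))"
      by (intro continuous_on_compose2[of S f T G, OF _ _ Suc.prems(3)] contG) (use Suc.prems in \<open>auto dest: Ck_cont\<close>)
  next
    fix c x :: 'a assume c: "c \<in> Basis" and x: "x \<in> T"
    have Gx: "G x \<in> S" using x Suc.prems(3) by auto
    define V where "V = (\<Sum>i\<in>Basis. pdiff [c] (\<lambda>x. G x \<bullet> i) x *\<^sub>R i)"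
    have dG: "((\<lambda>t. G (x + t *\<^sub>R c)) has_vector_derivative V) (at 0)"
      unfolding V_def
      by (rule vector_deriv_components) (use Suc.prems c x in \<open>simp del: pdiff.simps\<close>)
    have df: "(f has_derivative (\<lambda>v. \<Sum>b\<in>Basis. (v \<bullet> b) * pdiff [b] f (G x))) (at (G (x + 0 *\<^sub>R c)))"
      using Ck_frechet[OF Suc.prems(1) Gx] by simp
    have ch: "(f \<circ> (\<lambda>t. G (x + t *\<^sub>R c)) has_derivative
        (\<lambda>v. \<Sum>b\<in>Basis. (v \<bullet> b) * pdiff [b] f (G x)) \<circ> (\<lambda>h. h *\<^sub>R V)) (at 0)"
      by (rule diff_chain_at[OF dG[unfolded has_vector_derivative_def] df])
    have Vb: "V \<bullet> b = pdiff [c] (\<lambda>x. G x \<bullet> b) x" if "b \<in> Basis" for b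
      unfolding V_def using that by (simp add: inner_sum_left inner_Basis if_distrib cong: if_cong)
    have "(\<lambda>v. \<Sum>b\<in>Basis. (v \<bullet> b) * pdiff [b] f (G x)) \<circ> (\<lambda>h. h *\<^sub>R V)
        = (*) (\<Sum>b\<in>Basis. pdiff [b] f (G x) * pdiff [c] (\<lambda>x. G x \<bullet> b) x)"
      by (auto simp: fun_eq_iff Vb sum_distrib_left mult_ac intro!: sum.cong simp del: pdiff.simps)
    with ch show "((\<lambda>t. f (G (x + t *\<^sub>R c))) has_real_derivative
        (\<Sum>b\<in>Basis. pdiff [b] f (G x) * pdiff [c] (\<lambda>x. G x \<bullet> b) x)) (at 0)"
      by (simp add: has_field_derivative_def o_def)
  next
    fix c :: 'a assume c: "c \<in> Basis"
    have Gk: "\<forall>i\<in>Basis. Ck k T (\<lambda>x. G x \<bullet> i)" using Suc.prems(2) Ck_Suc_mono by blast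
    show "Ck k T (\<lambda>x. \<Sum>b\<in>Basis. pdiff [b] f (G x) * pdiff [c] (\<lambda>x. G x \<bullet> b) x)"
    proof (rule Ck_sum)
      fix b :: 'b assume b: "b \<in> Basis"
      show "Ck k T (\<lambda>x. pdiff [b] f (G x) * pdiff [c] (\<lambda>x. G x \<bullet> b) x)"
        using Suc.IH[OF Ck_pdiff[OF Suc.prems(1) b] Gk Suc.prems(3)] Ck_pdiff[of k T "\<lambda>x. G x \<bullet> b" c] Suc.prems(2) b c
        by (intro Ck_mult) (simp_all del: pdiff.simps)
    qed (use assms in auto)
  qed
qed

lemma Ck_inverse_real: "Ck k (- {0}) (\<lambda>y::real. inverse y)"
proof (induction k)
  case 0 then show ?case by (auto intro!: continuous_intros)
next
  case (Suc k)
  show ?case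
  proof (rule CkI[where D="\<lambda>b y. - (inverse y * inverse y)"])
    show "open (- {0::real})" by auto
    show "continuous_on (- {0::real}) inverse" by (auto intro!: continuous_intros)
    fix b y :: real assume "b \<in> Basis" "y \<in> - {0}"
    then show "((\<lambda>t. inverse (y + t *\<^sub>R b)) has_real_derivative - (inverse y * inverse y)) (at 0)"
      by (auto intro!: derivative_eq_intros simp: power2_eq_square)
  next
    fix b :: real
    show "Ck k (- {0}) (\<lambda>y. - (inverse y * inverse y))" using Suc by (intro Ck_uminus Ck_mult)
  qed
qed

lemma Ck_inverse:
  fixes g :: "'a::euclidean_space \<Rightarrow> real"
  assumes "Ck k S g" "\<forall>x\<in>S. g x \<noteq> 0"
  shows "Ck k S (\<lambda>x. inverse (g x))"
  by (rule Ck_comp[OF Ck_inverse_real]) (use assms in \<open>auto dest: Ck_open\<close>)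

lemma Ck_divide:
  fixes g :: "'a::euclidean_space \<Rightarrow> real"
  assumes "Ck k S f" "Ck k S g" "\<forall>x\<in>S. g x \<noteq> 0"
  shows "Ck k S (\<lambda>x. f x / g x)"
  using Ck_mult[OF assms(1) Ck_inverse[OF assms(2,3)]] by (simp add: divide_inverse)

declare Ck.simps(2)[simp del]

definition Cinf :: "'a::euclidean_space set \<Rightarrow> ('a \<Rightarrow> real) \<Rightarrow> bool" where
  "Cinf S f \<longleftrightarrow> (\<forall>k. Ck k S f)"

lemma smooth_on_Cinf: "smooth_on S f \<longleftrightarrow> Cinf S f"
  by (simp add: smooth_on_Ck Cinf_def)

lemma Cinf_open: "Cinf S f \<Longrightarrow> open S"
  unfolding Cinf_def by (erule allE[of _ 0]) (rule Ck_open)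
lemma Cinf_cont: "Cinf S f \<Longrightarrow> continuous_on S f"
  unfolding Cinf_def by (erule allE[of _ 0]) (rule Ck_cont)
lemma Cinf_const: "open S \<Longrightarrow> Cinf S (\<lambda>x. c)"
  unfolding Cinf_def by (intro allI Ck_const)
lemma Cinf_inner: "open S \<Longrightarrow> Cinf S (\<lambda>x. x \<bullet> i)"
  unfolding Cinf_def by (intro allI Ck_inner)
lemma Cinf_add: "Cinf S f \<Longrightarrow> Cinf S g \<Longrightarrow> Cinf S (\<lambda>x. f x + g x)"
  unfolding Cinf_def by (intro allI Ck_add) auto
lemma Cinf_diff: "Cinf S f \<Longrightarrow> Cinf S g \<Longrightarrow> Cinf S (\<lambda>x. f x - g x)"
  unfolding Cinf_def by (intro allI Ck_diff) auto
lemma Cinf_mult: "Cinf S f \<Longrightarrow> Cinf S g \<Longrightarrow> Cinf S (\<lambda>x. f x * g x)"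
  unfolding Cinf_def by (intro allI Ck_mult) auto
lemma Cinf_uminus: "Cinf S f \<Longrightarrow> Cinf S (\<lambda>x. - f x)"
  unfolding Cinf_def by (intro allI Ck_uminus) auto
lemma Cinf_power: "Cinf S f \<Longrightarrow> Cinf S (\<lambda>x. f x ^ n)"
  unfolding Cinf_def by (intro allI Ck_power) auto
lemma Cinf_inverse: assumes "Cinf S g" "\<forall>x\<in>S. g x \<noteq> 0" shows "Cinf S (\<lambda>x. inverse (g x))"
  unfolding Cinf_def proof
  fix k show "Ck k S (\<lambda>x. inverse (g x))"
    using assms(1)[unfolded Cinf_def, rule_format, of k] assms(2) by (rule Ck_inverse)
qed
lemma Cinf_divide: assumes "Cinf S f" "Cinf S g" "\<forall>x\<in>S. g x \<noteq> 0" shows "Cinf S (\<lambda>x. f x / g x)"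
  unfolding Cinf_def proof
  fix k show "Ck k S (\<lambda>x. f x / g x)"
    using assms(1)[unfolded Cinf_def, rule_format, of k] assms(2)[unfolded Cinf_def, rule_format, of k] assms(3) by (rule Ck_divide)
qed
lemma Cinf_subset: assumes "Cinf S f" "T \<subseteq> S" "open T" shows "Cinf T f"
  unfolding Cinf_def proof
  fix k show "Ck k T f"
    using assms(1)[unfolded Cinf_def, rule_format, of k] assms(2,3) by (rule Ck_subset)
qed
lemma Cinf_cong: assumes "Cinf S f" "\<forall>x\<in>S. f x = g x" shows "Cinf S g"
  unfolding Cinf_def proof
  fix k show "Ck k S g"
    using assms(1)[unfolded Cinf_def, rule_format, of k] assms(2) by (rule Ck_cong)
qed
lemma Cinf_pdiff: assumes "Cinf S f" "b \<in> Basis" shows "Cinf S (pdiff [b] f)"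
  unfolding Cinf_def proof
  fix k show "Ck k S (pdiff [b] f)"
    using assms(1)[unfolded Cinf_def, rule_format, of "Suc k"] assms(2) by (rule Ck_pdiff)
qed
lemma Cinf_D: assumes "Cinf S f" "b \<in> Basis" "x \<in> S" shows
    "((\<lambda>t. f (x + t *\<^sub>R b)) has_real_derivative pdiff [b] f x) (at 0)"
  using assms(1)[unfolded Cinf_def, rule_format, of "Suc 0"] assms(2,3) by (rule Ck_D)
lemma Cinf_frechet: assumes "Cinf S f" "x \<in> S" shows
    "(f has_derivative (\<lambda>v. \<Sum>b\<in>Basis. (v \<bullet> b) * pdiff [b] f x)) (at x)"
  using assms(1)[unfolded Cinf_def, rule_format, of "Suc 0"] assms(2) by (rule Ck_frechet)
lemma Cinf_comp:
  assumes "Cinf S f" "\<forall>i\<in>Basis. Cinf T (\<lambda>x. G x \<bullet> i)" "G ` T \<subseteq> S" "open T" shows "Cinf T (\<lambda>x. f (G x))"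
  unfolding Cinf_def proof
  fix k
  have "\<forall>i\<in>Basis. Ck k T (\<lambda>x. G x \<bullet> i)" using assms(2) unfolding Cinf_def by blast
  then show "Ck k T (\<lambda>x. f (G x))"
    using assms(1)[unfolded Cinf_def, rule_format, of k] assms(3,4) Ck_comp by blast
qed

lemma Basis_R3: "(Basis :: (real \<times> real \<times> real) set) = {(1,0,0), (0,1,0), (0,0,1)}"
  by (auto simp: Basis_prod_def zero_prod_def)
lemma Basis_R2: "(Basis :: (real \<times> real) set) = {(1,0), (0,1)}"
  by (auto simp: Basis_prod_def zero_prod_def)

lemma Cinf_fst3: "open S \<Longrightarrow> Cinf S (\<lambda>v::real\<times>real\<times>real. fst v)"
  using Cinf_inner[of S "(1,0,0)"] by (rule Cinf_cong) (auto simp: inner_prod_def)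
lemma Cinf_snd3: "open S \<Longrightarrow> Cinf S (\<lambda>v::real\<times>real\<times>real. fst (snd v))"
  using Cinf_inner[of S "(0,1,0)"] by (rule Cinf_cong) (auto simp: inner_prod_def)
lemma Cinf_thd3: "open S \<Longrightarrow> Cinf S (\<lambda>v::real\<times>real\<times>real. snd (snd v))"
  using Cinf_inner[of S "(0,0,1)"] by (rule Cinf_cong) (auto simp: inner_prod_def)
lemma Cinf_fst2: "open S \<Longrightarrow> Cinf S (\<lambda>v::real\<times>real. fst v)"
  using Cinf_inner[of S "(1,0)"] by (rule Cinf_cong) (auto simp: inner_prod_def)
lemma Cinf_snd2: "open S \<Longrightarrow> Cinf S (\<lambda>v::real\<times>real. snd v)"
  using Cinf_inner[of S "(0,1)"] by (rule Cinf_cong) (auto simp: inner_prod_def)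
lemma Cinf_id1: "open S \<Longrightarrow> Cinf S (\<lambda>v::real. v)"
  using Cinf_inner[of S "1"] by (rule Cinf_cong) auto

lemma Cinf_comp3:
  fixes f :: "real \<times> real \<times> real \<Rightarrow> real"
  assumes "Cinf S f" "Cinf T g1" "Cinf T g2" "Cinf T g3" "\<And>x. x \<in> T \<Longrightarrow> (g1 x, g2 x, g3 x) \<in> S"
  shows "Cinf T (\<lambda>x. f (g1 x, g2 x, g3 x))"
proof (rule Cinf_comp[OF assms(1)])
  show "open T" using assms(2) Cinf_open by blast
  show "(\<lambda>x. (g1 x, g2 x, g3 x)) ` T \<subseteq> S" using assms(5) by auto
  show "\<forall>i\<in>Basis. Cinf T (\<lambda>x. (g1 x, g2 x, g3 x) \<bullet> i)"
    using assms(2-4) by (auto simp: Basis_R3 inner_prod_def)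
qed

lemma Cinf_comp2:
  fixes f :: "real \<times> real \<Rightarrow> real"
  assumes "Cinf S f" "Cinf T g1" "Cinf T g2" "\<And>x. x \<in> T \<Longrightarrow> (g1 x, g2 x) \<in> S"
  shows "Cinf T (\<lambda>x. f (g1 x, g2 x))"
proof (rule Cinf_comp[OF assms(1)])
  show "open T" using assms(2) Cinf_open by blast
  show "(\<lambda>x. (g1 x, g2 x)) ` T \<subseteq> S" using assms(4) by auto
  show "\<forall>i\<in>Basis. Cinf T (\<lambda>x. (g1 x, g2 x) \<bullet> i)"
    using assms(2-3) by (auto simp: Basis_R2 inner_prod_def)
qed

lemma Cinf_comp1:
  fixes f :: "real \<Rightarrow> real"
  assumes "Cinf S f" "Cinf T g" "\<And>x. x \<in> T \<Longrightarrow> g x \<in> S"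
  shows "Cinf T (\<lambda>x. f (g x))"
proof (rule Cinf_comp[OF assms(1)])
  show "open T" using assms(2) Cinf_open by blast
  show "g ` T \<subseteq> S" using assms(3) by auto
  show "\<forall>i\<in>Basis. Cinf T (\<lambda>x. g x \<bullet> i)" using assms(2) by simp
qed

lemma Ck_bootstrap:
  fixes \<xi> :: "'a::euclidean_space \<Rightarrow> real"
  assumes "open W" "continuous_on W \<xi>"
    and "\<And>c v. c \<in> Basis \<Longrightarrow> v \<in> W \<Longrightarrow> ((\<lambda>t. \<xi> (v + t *\<^sub>R c)) has_real_derivative Dc c v) (at 0)"
    and "\<And>k c. c \<in> Basis \<Longrightarrow> Ck k W \<xi> \<Longrightarrow> Ck k W (Dc c)"
  shows "Ck k W \<xi>"
proof (induction k)
  case 0 then show ?case using assms by simp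
next
  case (Suc k)
  show ?case by (rule CkI[where D=Dc]) (use assms Suc in auto)
qed

lemma Cinf_bootstrap:
  fixes \<xi> :: "'a::euclidean_space \<Rightarrow> real"
  assumes "open W" "continuous_on W \<xi>"
    and "\<And>c v. c \<in> Basis \<Longrightarrow> v \<in> W \<Longrightarrow> ((\<lambda>t. \<xi> (v + t *\<^sub>R c)) has_real_derivative Dc c v) (at 0)"
    and "\<And>k c. c \<in> Basis \<Longrightarrow> Ck k W \<xi> \<Longrightarrow> Ck k W (Dc c)"
  shows "Cinf W \<xi>"
  unfolding Cinf_def using Ck_bootstrap[OF assms] by blast

lemma cont_param_integral:
  fixes H :: "'a::euclidean_space \<times> real \<Rightarrow> real"
  assumes "continuous_on Om H" "W \<times> {0..1} \<subseteq> Om"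
  shows "continuous_on W (\<lambda>v. integral {0..1} (\<lambda>t. H (v,t)))"
proof -
  have "continuous_on (W \<times> cbox 0 1) (\<lambda>(x, t). H (x, t))"
    using continuous_on_subset[OF assms(1)] assms(2) by (simp add: cbox_interval case_prod_eta)
  from integral_continuous_on_param[OF this] show ?thesis by (simp add: cbox_interval)
qed

lemma Ck_integral:
  fixes H :: "'a::euclidean_space \<times> real \<Rightarrow> real"
  assumes "open W" "W \<times> {0..1} \<subseteq> Om"
  shows "Cinf Om H \<Longrightarrow> Ck k W (\<lambda>v. integral {0..1} (\<lambda>t. H (v,t)))"
proof (induction k arbitrary: H)
  case 0
  then show ?case using assms cont_param_integral[OF Cinf_cont[OF 0] assms(2)] by simp
next
  case (Suc k)
  have Om: "open Om" using Suc.prems Cinf_open by blast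
  show ?case
  proof (rule CkI[where D="\<lambda>c v. integral {0..1} (\<lambda>t. pdiff [(c,0)] H (v,t))"])
    show "open W" by fact
    show "continuous_on W (\<lambda>v. integral {0..1} (\<lambda>t. H (v,t)))"
      using cont_param_integral[OF Cinf_cont[OF Suc.prems] assms(2)] .
  next
    fix c v :: 'a assume c: "c \<in> Basis" and v: "v \<in> W"
    have cB: "(c, 0::real) \<in> Basis" using c by (simp add: Basis_prod_def)
    have Hc: "Cinf Om (pdiff [(c,0)] H)" using Cinf_pdiff[OF Suc.prems cB] .
    obtain r where r: "r > 0" "ball v r \<subseteq> W" using assms(1) v openE by blast
    define U where "U = ball (0::real) r"
    have inW: "v + s *\<^sub>R c \<in> W" if "s \<in> U" for s
    proof -
      have "dist v (v + s *\<^sub>R c) < r" using that c by (simp add: U_def dist_norm)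
      then show ?thesis using r by auto
    qed
    have inO: "(v + s *\<^sub>R c, t) \<in> Om" if "s \<in> U" "t \<in> {0..1}" for s t
      using assms(2) inW[OF that(1)] that(2) by auto
    have "((\<lambda>s. integral (cbox 0 1) (\<lambda>t. H (v + s *\<^sub>R c, t))) has_field_derivative
           integral (cbox 0 1) (\<lambda>t. pdiff [(c,0)] H (v + 0 *\<^sub>R c, t))) (at 0 within U)"
    proof (rule leibniz_rule_field_derivative[where fx="\<lambda>s t. pdiff [(c,0)] H (v + s *\<^sub>R c, t)"])
      fix s t :: real assume s: "s \<in> U" and t: "t \<in> cbox 0 1"
      have p: "(v + s *\<^sub>R c, t) \<in> Om" using inO[OF s] t by (simp add: cbox_interval)
      have "((\<lambda>\<tau>. H ((v + s *\<^sub>R c, t) + \<tau> *\<^sub>R (c, 0))) has_real_derivative pdiff [(c,0)] H (v + s *\<^sub>R c, t)) (at 0)"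
        using Cinf_D[OF Suc.prems cB p] .
      from deriv_shift0[OF this, of s]
      have "((\<lambda>s'. H (v + s' *\<^sub>R c, t)) has_real_derivative pdiff [(c,0)] H (v + s *\<^sub>R c, t)) (at s)"
        by (simp add: algebra_simps)
      then show "((\<lambda>s. H (v + s *\<^sub>R c, t)) has_field_derivative pdiff [(c,0)] H (v + s *\<^sub>R c, t)) (at s within U)"
        by (rule has_field_derivative_at_within)
    next
      fix s :: real assume s: "s \<in> U"
      have "continuous_on {0..1} (\<lambda>t. H (v + s *\<^sub>R c, t))"
        by (rule continuous_on_compose2[OF Cinf_cont[OF Suc.prems]]) (use inO[OF s] in \<open>auto intro!: continuous_intros\<close>)
      then show "(\<lambda>t. H (v + s *\<^sub>R c, t)) integrable_on cbox 0 1"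
        by (simp add: cbox_interval integrable_continuous_interval)
    next
      show "continuous_on (U \<times> cbox 0 1) (\<lambda>(s, t). pdiff [(c,0)] H (v + s *\<^sub>R c, t))"
      proof -
        have "continuous_on (U \<times> cbox 0 1) (\<lambda>p. pdiff [(c,0)] H (v + fst p *\<^sub>R c, snd p))"
          by (rule continuous_on_compose2[OF Cinf_cont[OF Hc], where f="\<lambda>p. (v + fst p *\<^sub>R c, snd p)"])
             (use inO in \<open>auto intro!: continuous_intros simp: cbox_interval\<close>)
        then show ?thesis by (simp add: case_prod_unfold)
      qed
    next
      show "0 \<in> U" using r by (simp add: U_def)
      show "convex U" by (simp add: U_def)
    qed
    moreover have "at 0 within U = at 0" using r by (intro at_within_open) (auto simp: U_def)
    ultimately show "((\<lambda>s. integral {0..1} (\<lambda>t. H (v + s *\<^sub>R c, t))) has_real_derivative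
           integral {0..1} (\<lambda>t. pdiff [(c,0)] H (v, t))) (at 0)"
      by (simp add: cbox_interval)
  next
    fix c :: 'a assume c: "c \<in> Basis"
    have cB: "(c, 0::real) \<in> Basis" using c by (simp add: Basis_prod_def)
    show "Ck k W (\<lambda>v. integral {0..1} (\<lambda>t. pdiff [(c,0)] H (v,t)))"
      using Suc.IH[OF Cinf_pdiff[OF Suc.prems cB]] .
  qed
qed

lemma Cinf_integral:
  fixes H :: "'a::euclidean_space \<times> real \<Rightarrow> real"
  assumes "open W" "W \<times> {0..1} \<subseteq> Om" "Cinf Om H"
  shows "Cinf W (\<lambda>v. integral {0..1} (\<lambda>t. H (v,t)))"
  unfolding Cinf_def using Ck_integral[OF assms(1,2) assms(3)] by blast

lemma Cinf_p1: "open S \<Longrightarrow> Cinf S (\<lambda>p::(real\<times>real\<times>real)\<times>real. fst (fst p))"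
  using Cinf_inner[of S "((1,0,0),0)"] by (rule Cinf_cong) (auto simp: inner_prod_def)
lemma Cinf_p2: "open S \<Longrightarrow> Cinf S (\<lambda>p::(real\<times>real\<times>real)\<times>real. fst (snd (fst p)))"
  using Cinf_inner[of S "((0,1,0),0)"] by (rule Cinf_cong) (auto simp: inner_prod_def)
lemma Cinf_p3: "open S \<Longrightarrow> Cinf S (\<lambda>p::(real\<times>real\<times>real)\<times>real. snd (snd (fst p)))"
  using Cinf_inner[of S "((0,0,1),0)"] by (rule Cinf_cong) (auto simp: inner_prod_def)
lemma Cinf_pt: "open S \<Longrightarrow> Cinf S (\<lambda>p::(real\<times>real\<times>real)\<times>real. snd p)"
  using Cinf_inner[of S "((0,0,0),1)"] by (rule Cinf_cong) (auto simp: inner_prod_def)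

lemma hadamard_Y:
  fixes B :: "real \<times> real \<times> real \<Rightarrow> real"
  assumes B: "Cinf W B" and seg: "\<And>X Y e t. (X,Y,e) \<in> W \<Longrightarrow> t \<in> {0..1} \<Longrightarrow> (X, t*Y, e) \<in> W"
  defines "Q \<equiv> \<lambda>v. integral {0..1} (\<lambda>t. pdiff [(0,1,0)] B (fst v, t * fst (snd v), snd (snd v)))"
  shows "Cinf W Q" and "\<And>X Y e. (X,Y,e) \<in> W \<Longrightarrow> B (X,Y,e) = B (X,0,e) + Y * Q (X,Y,e)"
proof -
  have W: "open W" using B Cinf_open by blast
  have b2: "((0::real),(1::real),(0::real)) \<in> Basis" by (simp add: Basis_R3)
  have BY: "Cinf W (pdiff [(0,1,0)] B)" using Cinf_pdiff[OF B b2] .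
  define \<sigma> where "\<sigma> p = (fst (fst p), snd p * fst (snd (fst p)), snd (snd (fst p)))" for p :: "(real\<times>real\<times>real)\<times>real"
  define Om where "Om = \<sigma> -` W"
  have Om: "open Om" unfolding Om_def \<sigma>_def
    by (rule open_vimage[OF W]) (auto intro!: continuous_intros)
  have sub: "W \<times> {0..1} \<subseteq> Om"
    unfolding Om_def \<sigma>_def using seg by auto
  have "Cinf Om (\<lambda>p. pdiff [(0,1,0)] B (fst (fst p), snd p * fst (snd (fst p)), snd (snd (fst p))))"
    by (rule Cinf_comp3[OF BY Cinf_p1[OF Om] Cinf_mult[OF Cinf_pt[OF Om] Cinf_p2[OF Om]] Cinf_p3[OF Om]])
       (auto simp: Om_def \<sigma>_def)
  from Cinf_integral[OF W sub this]
  show "Cinf W Q" unfolding Q_def by simp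
next
  fix X Y e assume v: "(X,Y,e) \<in> W"
  have b2: "((0::real),(1::real),(0::real)) \<in> Basis" by (simp add: Basis_R3)
  define \<phi> where "\<phi> t = B (X, t * Y, e)" for t
  define g where "g t = pdiff [(0,1,0)] B (X, t * Y, e)" for t
  have ptW: "(X, t * Y, e) \<in> W" if "t \<in> {0..1}" for t using seg[OF v that] .
  have der: "(\<phi> has_vector_derivative (g t * Y)) (at t within {0..1})" if t: "t \<in> {0..1}" for t
  proof -
    have d0: "((\<lambda>\<tau>. B ((X, t*Y, e) + \<tau> *\<^sub>R (0,1,0))) has_real_derivative g t) (at 0)"
      unfolding g_def using Cinf_D[OF B b2 ptW[OF t]] .
    have d0': "((\<lambda>\<tau>. B ((X, t*Y, e) + \<tau> *\<^sub>R (0,1,0))) has_real_derivative g t) (at ((\<lambda>s. (s - t) * Y) t))"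
      using d0 by simp
    have "((\<lambda>s. (s - t) * Y) has_real_derivative Y) (at t)"
      by (auto intro!: derivative_eq_intros)
    from DERIV_chain2[OF d0' this]
    have "((\<lambda>s. B ((X, t*Y, e) + ((s - t) * Y) *\<^sub>R (0,1,0))) has_real_derivative g t * Y) (at t)" .
    moreover have "(\<lambda>s. B ((X, t*Y, e) + ((s - t) * Y) *\<^sub>R (0,1,0))) = \<phi>"
      by (auto simp: \<phi>_def fun_eq_iff algebra_simps)
    ultimately have "(\<phi> has_real_derivative g t * Y) (at t)" by simp
    then show ?thesis
      by (simp add: has_real_derivative_iff_has_vector_derivative[symmetric] has_field_derivative_at_within)
  qed
  have I1: "((\<lambda>t. g t * Y) has_integral (\<phi> 1 - \<phi> 0)) {0..1}"
    by (rule fundamental_theorem_of_calculus[OF _ der]) auto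
  have cg: "continuous_on {0..1} g"
    unfolding g_def
    by (rule continuous_on_compose2[OF Cinf_cont[OF Cinf_pdiff[OF B b2]], where f="\<lambda>t. (X, t*Y, e)"])
       (use ptW in \<open>auto intro!: continuous_intros\<close>)
  have "(g has_integral integral {0..1} g) {0..1}"
    using integrable_continuous_interval[OF cg] by (rule integrable_integral)
  from has_integral_mult_left[OF this, of Y]
  have I2: "((\<lambda>t. g t * Y) has_integral (integral {0..1} g * Y)) {0..1}" .
  have "\<phi> 1 - \<phi> 0 = integral {0..1} g * Y" using has_integral_unique[OF I1 I2] .
  moreover have "Q (X,Y,e) = integral {0..1} g" unfolding Q_def g_def by simp
  ultimately show "B (X,Y,e) = B (X,0,e) + Y * Q (X,Y,e)" by (simp add: \<phi>_def algebra_simps)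
qed

lemma dX1:
  fixes Xf :: "real \<times> real \<times> real \<Rightarrow> real"
  assumes "Cinf UNIV Xf"
  shows "((\<lambda>s. Xf (s, y, e)) has_real_derivative pdiff [(1,0,0)] Xf (x, y, e)) (at x)"
proof -
  have b: "((1::real),(0::real),(0::real)) \<in> Basis" by (simp add: Basis_R3)
  have "((\<lambda>\<tau>. Xf ((x, y, e) + \<tau> *\<^sub>R (1,0,0))) has_real_derivative pdiff [(1,0,0)] Xf (x, y, e)) (at 0)"
    by (rule Cinf_D[OF assms b]) simp
  then have "((\<lambda>\<tau>. Xf (x + \<tau>, y, e)) has_real_derivative pdiff [(1,0,0)] Xf (x, y, e)) (at 0)"
    by (simp add: add.commute)
  from deriv_shift0[OF this, of x] show ?thesis by simp
qed

lemma xmono: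
  fixes Xf :: "real \<times> real \<times> real \<Rightarrow> real"
  assumes XC: "Cinf UNIV Xf"
    and pos: "\<And>x. a' \<le> x \<Longrightarrow> x \<le> b' \<Longrightarrow> pdiff [(1,0,0)] Xf (x, y, e) > 0"
    and "a' \<le> x" "x < x'" "x' \<le> b'"
  shows "Xf (x, y, e) < Xf (x', y, e)"
proof (rule DERIV_pos_imp_increasing[OF assms(4)])
  fix s assume "x \<le> s" "s \<le> x'"
  then show "\<exists>d. ((\<lambda>s. Xf (s, y, e)) has_real_derivative d) (at s) \<and> d > 0"
    using dX1[OF XC] pos assms(3,5) by (meson order_trans)
qed

lemma sum_R3: "(\<Sum>b\<in>(Basis::(real\<times>real\<times>real) set). F b) = F (1,0,0) + F (0,1,0) + F (0,0,1)"
  by (simp add: Basis_R3 add.assoc)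

lemma xi_construct:
  fixes Xf :: "real \<times> real \<times> real \<Rightarrow> real"
  assumes XC: "Cinf UNIV Xf"
    and pos: "\<And>x y e. a' \<le> x \<Longrightarrow> x \<le> b' \<Longrightarrow> \<bar>y\<bar> \<le> \<eta> \<Longrightarrow> \<bar>e\<bar> \<le> \<eta> \<Longrightarrow> pdiff [(1,0,0)] Xf (x, y, e) > 0"
    and ab: "a' < b'"
    and lo: "\<And>y e. \<bar>y\<bar> < \<eta> \<Longrightarrow> \<bar>e\<bar> < \<eta> \<Longrightarrow> Xf (a', y, e) < lo"
    and hi: "\<And>y e. \<bar>y\<bar> < \<eta> \<Longrightarrow> \<bar>e\<bar> < \<eta> \<Longrightarrow> hi < Xf (b', y, e)"
    and Wdef: "W = {v. lo < fst v \<and> fst v < hi \<and> \<bar>fst (snd v)\<bar> < \<eta> \<and> \<bar>snd (snd v)\<bar> < \<eta>}"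
  obtains \<xi> where "Cinf W \<xi>"
    "\<And>X Y e. (X, Y, e) \<in> W \<Longrightarrow> a' < \<xi> (X, Y, e) \<and> \<xi> (X, Y, e) < b' \<and> Xf (\<xi> (X, Y, e), Y, e) = X"
proof -
  define Ro where "Ro = {v::real\<times>real\<times>real. a' < fst v \<and> fst v < b' \<and> \<bar>fst (snd v)\<bar> < \<eta> \<and> \<bar>snd (snd v)\<bar> < \<eta>}"
  have oRo: "open Ro" unfolding Ro_def
    by (intro open_Collect_conj open_Collect_less continuous_intros)
  have oW: "open W" unfolding Wdef
    by (intro open_Collect_conj open_Collect_less continuous_intros)
  define P where "P v = (Xf v, fst (snd v), snd (snd v))" for v :: "real\<times>real\<times>real"
  have contX: "continuous_on UNIV Xf" using Cinf_cont[OF XC] .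
  have contP: "continuous_on Ro P" unfolding P_def
    by (intro continuous_intros continuous_on_subset[OF contX]) auto
  have injP: "inj_on P Ro"
  proof (rule inj_onI)
    fix u v assume u: "u \<in> Ro" and v: "v \<in> Ro" and eq: "P u = P v"
    obtain x y e where uu: "u = (x, y, e)" by (cases u) auto
    obtain x' y' e' where vv: "v = (x', y', e')" by (cases v) auto
    have yy: "y' = y" "e' = e" and XX: "Xf (x, y, e) = Xf (x', y, e)" using eq by (auto simp: P_def uu vv)
    have ranges: "a' < x" "x < b'" "a' < x'" "x' < b'" "\<bar>y\<bar> \<le> \<eta>" "\<bar>e\<bar> \<le> \<eta>"
      using u v by (auto simp: Ro_def uu vv yy)
    have "x = x'"
    proof (rule ccontr)
      assume "x \<noteq> x'"
      then consider "x < x'" | "x' < x" by linarith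
      then show False
      proof cases
        case 1
        have "Xf (x, y, e) < Xf (x', y, e)"
          by (rule xmono[OF XC, of a' b']) (use pos ranges 1 in auto)
        then show False using XX by simp
      next
        case 2
        have "Xf (x', y, e) < Xf (x, y, e)"
          by (rule xmono[OF XC, of a' b']) (use pos ranges 2 in auto)
        then show False using XX by simp
      qed
    qed
    then show "u = v" using uu vv yy by simp
  qed
  define gI where "gI = inv_into Ro P"
  have gP: "gI (P v) = v" if "v \<in> Ro" for v
    unfolding gI_def using inv_into_f_f[OF injP that] .
  have contg: "continuous_on (P ` Ro) gI"
    unfolding gI_def by (rule continuous_on_inverse_open[OF oRo contP]) (auto intro: inv_into_f_f[OF injP])
  have WP: "W \<subseteq> P ` Ro"
  proof
    fix v assume v: "v \<in> W"
    obtain X Y e where vv: "v = (X, Y, e)" by (cases v) auto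
    have r: "lo < X" "X < hi" "\<bar>Y\<bar> < \<eta>" "\<bar>e\<bar> < \<eta>" using v by (auto simp: Wdef vv)
    have "continuous_on {a'..b'} (\<lambda>s. Xf (s, Y, e))"
      by (intro continuous_on_compose2[OF contX]) (auto intro!: continuous_intros)
    then obtain x where x: "a' \<le> x" "x \<le> b'" "Xf (x, Y, e) = X"
      using IVT'[of "\<lambda>s. Xf (s, Y, e)" a' X b'] lo[OF r(3,4)] hi[OF r(3,4)] r(1,2) ab by force
    have "x \<noteq> a'" using x lo[OF r(3,4)] r(1) by auto
    moreover have "x \<noteq> b'" using x hi[OF r(3,4)] r(2) by auto
    ultimately have "(x, Y, e) \<in> Ro" using x r by (auto simp: Ro_def)
    moreover have "P (x, Y, e) = v" using x by (simp add: P_def vv)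
    ultimately show "v \<in> P ` Ro" by force
  qed
  have gW: "gI v \<in> Ro \<and> P (gI v) = v" if vW: "v \<in> W" for v
  proof -
    obtain w where w: "w \<in> Ro" "v = P w" using WP vW by blast
    then show ?thesis using gP by simp
  qed
  define \<xi> where "\<xi> v = fst (gI v)" for v
  have gform: "gI v = (\<xi> v, fst (snd v), snd (snd v))" if "v \<in> W" for v
  proof -
    have "P (gI v) = v" using gW[OF that] by blast
    then have "fst (snd (gI v)) = fst (snd v)" "snd (snd (gI v)) = snd (snd v)"
      by (auto simp: P_def prod_eq_iff)
    then show ?thesis by (simp add: \<xi>_def prod_eq_iff)
  qed
  have xiprop: "a' < \<xi> (X, Y, e) \<and> \<xi> (X, Y, e) < b' \<and> Xf (\<xi> (X, Y, e), Y, e) = X" if "(X, Y, e) \<in> W" for X Y e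
  proof -
    have "gI (X,Y,e) \<in> Ro" "P (gI (X,Y,e)) = (X,Y,e)" using gW[OF that] by auto
    then show ?thesis using gform[OF that] by (auto simp: Ro_def P_def)
  qed
  define R where "R c w = (fst c - fst (snd c) * pdiff [(0,1,0)] Xf w - snd (snd c) * pdiff [(0,0,1)] Xf w) / pdiff [(1,0,0)] Xf w"
    for c w :: "real\<times>real\<times>real"
  have Xxpos: "pdiff [(1,0,0)] Xf w > 0" if "w \<in> Ro" for w
    using that pos by (cases w) (auto simp: Ro_def)
  have dxi: "((\<lambda>t. \<xi> (v + t *\<^sub>R c)) has_real_derivative R c (\<xi> v, fst (snd v), snd (snd v))) (at 0)"
    if c: "c \<in> Basis" and v: "v \<in> W" for c v
  proof -
    define x where "x = gI v"
    have xRo: "x \<in> Ro" and Px: "P x = v" using gW[OF v] by (auto simp: x_def)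
    define Xx Xy Xe where "Xx = pdiff [(1,0,0)] Xf x" and "Xy = pdiff [(0,1,0)] Xf x" and "Xe = pdiff [(0,0,1)] Xf x"
    have Xx0: "Xx \<noteq> 0" using Xxpos[OF xRo] by (simp add: Xx_def)
    define P' where "P' u = (fst u * Xx + fst (snd u) * Xy + snd (snd u) * Xe, fst (snd u), snd (snd u))" for u :: "real\<times>real\<times>real"
    define g' where "g' u = ((fst u - fst (snd u) * Xy - snd (snd u) * Xe) / Xx, fst (snd u), snd (snd u))" for u :: "real\<times>real\<times>real"
    have dXf: "(Xf has_derivative (\<lambda>u. fst u * Xx + fst (snd u) * Xy + snd (snd u) * Xe)) (at x)"
      using Cinf_frechet[OF XC, of x] by (simp add: sum_R3 Xx_def Xy_def Xe_def inner_prod_def)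
    have dP: "(P has_derivative P') (at x)"
      unfolding P_def P'_def
      by (intro has_derivative_Pair dXf has_derivative_fst has_derivative_snd has_derivative_ident)
    have idd: "P' \<circ> g' = id"
      using Xx0 by (auto simp: fun_eq_iff P'_def g'_def field_simps)
    have dg: "(gI has_derivative g') (at (P x))"
      by (rule has_derivative_inverse_strong[OF oRo xRo contP gP dP idd])
    have dline: "((\<lambda>t::real. v + t *\<^sub>R c) has_derivative (\<lambda>t. t *\<^sub>R c)) (at 0)"
      by (auto intro!: derivative_eq_intros)
    have "((\<lambda>t. gI (v + t *\<^sub>R c)) has_derivative (\<lambda>t. g' (t *\<^sub>R c))) (at 0)"
      using diff_chain_at[OF dline, of gI g'] dg Px by (simp add: o_def)
    then have "((\<lambda>t. \<xi> (v + t *\<^sub>R c)) has_derivative (\<lambda>t. fst (g' (t *\<^sub>R c)))) (at 0)"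
      unfolding \<xi>_def by (rule has_derivative_fst)
    moreover have "(\<lambda>t. fst (g' (t *\<^sub>R c))) = (\<lambda>t. R c (\<xi> v, fst (snd v), snd (snd v)) * t)"
    proof -
      have "x = (\<xi> v, fst (snd v), snd (snd v))" using gform[OF v] by (simp add: x_def)
      then show ?thesis
        by (auto simp: fun_eq_iff g'_def R_def Xx_def Xy_def Xe_def field_simps)
    qed
    moreover have "(\<lambda>t. R c (\<xi> v, fst (snd v), snd (snd v)) * t) = (*) (R c (\<xi> v, fst (snd v), snd (snd v)))"
      by (auto simp: fun_eq_iff)
    ultimately show ?thesis unfolding has_field_derivative_def by simp
  qed
  have contxi: "continuous_on W \<xi>"
    unfolding \<xi>_def by (intro continuous_intros continuous_on_subset[OF contg WP])
  have RC: "Cinf Ro (R c)" for c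
  proof -
    have b: "((1::real),(0::real),(0::real)) \<in> Basis" "((0::real),(1::real),(0::real)) \<in> Basis"
      "((0::real),(0::real),(1::real)) \<in> Basis" by (auto simp: Basis_R3)
    have D: "Cinf Ro (pdiff [(1,0,0)] Xf)" "Cinf Ro (pdiff [(0,1,0)] Xf)" "Cinf Ro (pdiff [(0,0,1)] Xf)"
      using Cinf_subset[OF Cinf_pdiff[OF XC b(1)] _ oRo] Cinf_subset[OF Cinf_pdiff[OF XC b(2)] _ oRo]
        Cinf_subset[OF Cinf_pdiff[OF XC b(3)] _ oRo] by auto
    have nz: "\<forall>w\<in>Ro. pdiff [(1,0,0)] Xf w \<noteq> 0" using Xxpos by (metis less_irrefl)
    show ?thesis unfolding R_def
      by (intro Cinf_divide Cinf_diff Cinf_mult Cinf_const oRo D nz)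
  qed
  have "Cinf W \<xi>"
  proof (rule Cinf_bootstrap[OF oW contxi, where Dc="\<lambda>c v. R c (\<xi> v, fst (snd v), snd (snd v))"])
    fix c v :: "real\<times>real\<times>real" assume "c \<in> Basis" "v \<in> W"
    then show "((\<lambda>t. \<xi> (v + t *\<^sub>R c)) has_real_derivative R c (\<xi> v, fst (snd v), snd (snd v))) (at 0)"
      by (rule dxi)
  next
    fix k and c :: "real\<times>real\<times>real" assume c: "c \<in> Basis" and xk: "Ck k W \<xi>"
    have Y: "Ck k W (\<lambda>v::real\<times>real\<times>real. fst (snd v))" "Ck k W (\<lambda>v::real\<times>real\<times>real. snd (snd v))"
      using Cinf_snd3[OF oW] Cinf_thd3[OF oW] unfolding Cinf_def by auto
    have Rk: "Ck k Ro (R c)" using RC[of c] unfolding Cinf_def by blast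
    show "Ck k W (\<lambda>v. R c (\<xi> v, fst (snd v), snd (snd v)))"
    proof (rule Ck_comp[OF Rk _ _ oW])
      show "\<forall>i\<in>Basis. Ck k W (\<lambda>v. (\<xi> v, fst (snd v), snd (snd v)) \<bullet> i)"
        using xk Y by (auto simp: Basis_R3 inner_prod_def)
      show "(\<lambda>v. (\<xi> v, fst (snd v), snd (snd v))) ` W \<subseteq> Ro"
      proof
        fix w assume "w \<in> (\<lambda>v. (\<xi> v, fst (snd v), snd (snd v))) ` W"
        then obtain v where v: "v \<in> W" "w = (\<xi> v, fst (snd v), snd (snd v))" by blast
        then show "w \<in> Ro" using gW[OF v(1)] gform[OF v(1)] by simp
      qed
    qed
  qed
  then show ?thesis using that xiprop by blast
qed

lemma Xf_smooth:
  assumes "Cinf UNIV h"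
  shows "Cinf UNIV (\<lambda>v::real\<times>real\<times>real. - h v * (1 + (fst v)\<^sup>2) ^ N)"
  by (intro Cinf_mult Cinf_uminus assms Cinf_power Cinf_add Cinf_const Cinf_fst3) auto

lemma choose_N:
  fixes h :: "real \<times> real \<times> real \<Rightarrow> real"
  assumes hC: "Cinf UNIV h" and ab: "a < 0" "0 < b"
    and sgn: "\<forall>x\<in>{a..b} - {0}. x * h (x, 0, 0) < 0"
    and dd: "d < 0" "((\<lambda>x. h (x, 0, 0)) has_real_derivative d) (at 0)"
  shows "\<exists>N::nat. N \<ge> 1 \<and> (\<forall>x\<in>{a..b}. pdiff [(1,0,0)] (\<lambda>v. - h v * (1 + (fst v)\<^sup>2) ^ N) (x,0,0) > 0)"
proof -
  define hx where "hx = pdiff [(1,0,0)] h"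
  have dh: "((\<lambda>s. h (s,0,0)) has_real_derivative hx (x,0,0)) (at x)" for x
    unfolding hx_def by (rule dX1[OF hC])
  have hx0: "hx (0,0,0) = d" using DERIV_unique[OF dh[of 0] dd(2)] .
  have b1: "((1::real),(0::real),(0::real)) \<in> Basis" by (simp add: Basis_R3)
  have chx: "continuous_on UNIV hx" unfolding hx_def using Cinf_cont[OF Cinf_pdiff[OF hC b1]] .
  have ch0: "continuous_on UNIV (\<lambda>x::real. hx (x,0,0))"
    by (rule continuous_on_compose2[OF chx]) (auto intro!: continuous_intros)
  have ch: "continuous_on UNIV (\<lambda>x::real. h (x,0,0))"
    by (rule continuous_on_compose2[OF Cinf_cont[OF hC]]) (auto intro!: continuous_intros)
  obtain \<delta> where \<delta>: "\<delta> > 0" "\<And>x. dist x 0 < \<delta> \<Longrightarrow> dist (hx (x,0,0)) (hx (0,0,0)) < - d"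
    using ch0 dd(1) unfolding continuous_on_iff by (metis UNIV_I neg_0_less_iff_less)
  define \<delta>' where "\<delta>' = \<delta> / 2"
  have \<delta>': "\<delta>' > 0" using \<delta> by (simp add: \<delta>'_def)
  have hxneg: "hx (x,0,0) < 0" if "\<bar>x\<bar> \<le> \<delta>'" for x
  proof -
    have "dist x 0 < \<delta>" using that \<delta> by (simp add: \<delta>'_def dist_real_def)
    from \<delta>(2)[OF this] show ?thesis using hx0 by (simp add: dist_real_def)
  qed
  have xh: "x * h (x,0,0) \<le> 0" if "x \<in> {a..b}" for x
    using sgn that by (cases "x = 0") (auto intro: less_imp_le)
  obtain c where c: "c > 0" "\<And>x. x \<in> {a..b} \<Longrightarrow> \<delta>' \<le> \<bar>x\<bar> \<Longrightarrow> c \<le> - (x * h (x,0,0))"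
  proof (cases "{a..b} \<inter> {x. \<delta>' \<le> \<bar>x\<bar>} = {}")
    case True
    have "\<And>x. x \<in> {a..b} \<Longrightarrow> \<delta>' \<le> \<bar>x\<bar> \<Longrightarrow> 1 \<le> - (x * h (x,0,0))"
      using True by blast
    then show ?thesis using that[of 1] by simp
  next
    case False
    have cK: "compact ({a..b} \<inter> {x. \<delta>' \<le> \<bar>x\<bar>})"
      by (intro compact_Int_closed compact_Icc closed_Collect_le continuous_intros)
    have "continuous_on ({a..b} \<inter> {x. \<delta>' \<le> \<bar>x\<bar>}) (\<lambda>x. - (x * h (x,0,0)))"
      by (intro continuous_intros continuous_on_subset[OF ch]) auto
    from continuous_attains_inf[OF cK False this] obtain x0 where
      x0: "x0 \<in> {a..b} \<inter> {x. \<delta>' \<le> \<bar>x\<bar>}" "\<And>y. y \<in> {a..b} \<inter> {x. \<delta>' \<le> \<bar>x\<bar>} \<Longrightarrow> - (x0 * h (x0,0,0)) \<le> - (y * h (y,0,0))"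
      by blast
    have "x0 \<noteq> 0" using x0(1) \<delta>' by auto
    then have "- (x0 * h (x0,0,0)) > 0" using sgn x0(1) by auto
    then show ?thesis using that[of "- (x0 * h (x0,0,0))"] x0(2) by auto
  qed
  obtain M0 where M0: "\<And>x. x \<in> {a..b} \<Longrightarrow> \<bar>hx (x,0,0) * (1 + x\<^sup>2)\<bar> \<le> M0"
  proof -
    have "continuous_on {a..b} (\<lambda>x. \<bar>hx (x,0,0) * (1 + x\<^sup>2)\<bar>)"
      by (intro continuous_intros continuous_on_subset[OF ch0]) auto
    from continuous_attains_sup[OF compact_Icc _ this] ab obtain x1 where
      "\<And>y. y \<in> {a..b} \<Longrightarrow> \<bar>hx (y,0,0) * (1 + y\<^sup>2)\<bar> \<le> \<bar>hx (x1,0,0) * (1 + x1\<^sup>2)\<bar>"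
      by fastforce
    then show ?thesis using that by blast
  qed
  define N where "N = nat \<lceil>M0 / (2 * c)\<rceil> + 1"
  have N1: "N \<ge> 1" by (simp add: N_def)
  have NM: "2 * real N * c > M0"
  proof -
    have "M0 / (2 * c) < real N" unfolding N_def by linarith
    then show ?thesis using c(1) by (simp add: field_simps)
  qed
  define Xf where "Xf = (\<lambda>v::real\<times>real\<times>real. - h v * (1 + (fst v)\<^sup>2) ^ N)"
  have XC: "Cinf UNIV Xf" unfolding Xf_def by (rule Xf_smooth[OF hC])
  have "pdiff [(1,0,0)] Xf (x,0,0) > 0" if x: "x \<in> {a..b}" for x
  proof -
    define q where "q = (1 + x\<^sup>2) ^ (N - 1)"
    have q: "q > 0" unfolding q_def by (simp add: add_pos_nonneg)
    have pq: "(1 + x\<^sup>2) ^ N = q * (1 + x\<^sup>2)"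
      unfolding q_def using N1 by (metis Suc_diff_le diff_Suc_1 mult.commute power_Suc)
    have d1: "((\<lambda>s. 1 + s\<^sup>2) has_real_derivative 2 * x) (at x)"
      by (auto intro!: derivative_eq_intros)
    have d2: "((\<lambda>s. (1 + s\<^sup>2) ^ N) has_real_derivative real N * (2 * x) * q) (at x)"
      using DERIV_power[OF d1, of N] by (simp add: q_def mult.assoc)
    have d3: "((\<lambda>s. - h (s,0,0) * (1 + s\<^sup>2) ^ N) has_real_derivative
        - hx (x,0,0) * (1 + x\<^sup>2) ^ N + real N * (2 * x) * q * - h (x,0,0)) (at x)"
      using DERIV_mult[OF DERIV_minus[OF dh[of x]] d2] by simp
    have d4: "((\<lambda>s. - h (s,0,0) * (1 + s\<^sup>2) ^ N) has_real_derivative pdiff [(1,0,0)] Xf (x,0,0)) (at x)"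
      using dX1[OF XC, of 0 0 x] by (simp add: Xf_def)
    have eq: "pdiff [(1,0,0)] Xf (x,0,0) = q * (- hx (x,0,0) * (1 + x\<^sup>2) + 2 * real N * (- (x * h (x,0,0))))"
      using DERIV_unique[OF d4 d3] pq by (simp add: algebra_simps)
    have E: "- hx (x,0,0) * (1 + x\<^sup>2) + 2 * real N * (- (x * h (x,0,0))) > 0"
    proof (cases "\<bar>x\<bar> \<le> \<delta>'")
      case True
      have "- hx (x,0,0) * (1 + x\<^sup>2) > 0" using hxneg[OF True] by (simp add: add_pos_nonneg mult_neg_pos)
      moreover have "2 * real N * (- (x * h (x,0,0))) \<ge> 0" using xh[OF x] by (intro mult_nonneg_nonneg) auto
      ultimately show ?thesis by linarith
    next
      case False
      have "c \<le> - (x * h (x,0,0))" using c(2)[OF x] False by simp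
      then have "2 * real N * c \<le> 2 * real N * (- (x * h (x,0,0)))" by (intro mult_left_mono) auto
      moreover have "hx (x,0,0) * (1 + x\<^sup>2) \<le> M0" using M0[OF x] by linarith
      ultimately show ?thesis using NM by linarith
    qed
    show ?thesis unfolding eq using q E by simp
  qed
  then show ?thesis using N1 unfolding Xf_def by blast
qed

lemma norm3_le: "norm ((u, v, w) :: real \<times> real \<times> real) \<le> \<bar>u\<bar> + \<bar>v\<bar> + \<bar>w\<bar>"
proof -
  have "norm (u, v, w) \<le> norm u + norm (v, w)" by (rule norm_Pair_le)
  also have "norm (v, w) \<le> norm v + norm w" by (rule norm_Pair_le)
  finally show ?thesis by simp
qed

lemma choose_rho:
  fixes G :: "real \<times> real \<times> real \<Rightarrow> real"
  assumes cG: "continuous_on UNIV G" and pos: "\<forall>x\<in>{a..b}. G (x,0,0) > 0" and ab: "a \<le> b"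
  shows "\<exists>\<rho>>0. \<forall>x y e. a - \<rho> \<le> x \<and> x \<le> b + \<rho> \<and> \<bar>y\<bar> \<le> \<rho> \<and> \<bar>e\<bar> \<le> \<rho> \<longrightarrow> G (x,y,e) > 0"
proof -
  have oP: "open {v. 0 < G v}" by (rule open_Collect_less[OF continuous_on_const cG])
  define K0 where "K0 = (\<lambda>x::real. (x, 0::real, 0::real)) ` {a..b}"
  have cK: "compact K0" unfolding K0_def
    by (rule compact_continuous_image) (auto intro!: continuous_intros)
  have sub: "K0 \<subseteq> {v. 0 < G v}" using pos by (auto simp: K0_def)
  obtain \<epsilon> where \<epsilon>: "\<epsilon> > 0" "(\<Union>x\<in>K0. ball x \<epsilon>) \<subseteq> {v. 0 < G v}"
    using compact_subset_open_imp_ball_epsilon_subset[OF cK oP sub] by blast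
  show ?thesis
  proof (intro exI[of _ "\<epsilon>/4"] conjI allI impI)
    show "\<epsilon>/4 > 0" using \<epsilon> by simp
    fix x y e assume H: "a - \<epsilon>/4 \<le> x \<and> x \<le> b + \<epsilon>/4 \<and> \<bar>y\<bar> \<le> \<epsilon>/4 \<and> \<bar>e\<bar> \<le> \<epsilon>/4"
    define x0 where "x0 = max a (min b x)"
    have x0: "x0 \<in> {a..b}" "\<bar>x0 - x\<bar> \<le> \<epsilon>/4" using H ab unfolding x0_def by (auto simp: abs_le_iff split: split_max split_min)
    have "dist (x0, 0, 0) (x, y, e) = norm ((x0 - x, - y, - e) :: real \<times> real \<times> real)"
      by (simp add: dist_norm)
    also have "\<dots> \<le> \<bar>x0 - x\<bar> + \<bar>- y\<bar> + \<bar>- e\<bar>" by (rule norm3_le)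
    also have "\<dots> < \<epsilon>" using x0 H \<epsilon> by simp
    finally have "(x, y, e) \<in> ball (x0, 0, 0) \<epsilon>" by simp
    moreover have "(x0, 0, 0) \<in> K0" using x0 by (simp add: K0_def)
    ultimately show "G (x, y, e) > 0" using \<epsilon>(2) by blast
  qed
qed

lemma cont_pt:
  fixes G :: "real \<times> real \<times> real \<Rightarrow> real"
  assumes cG: "continuous_on UNIV G" and "\<gamma> > 0"
  shows "\<exists>\<delta>>0. \<forall>y e. \<bar>y\<bar> < \<delta> \<and> \<bar>e\<bar> < \<delta> \<longrightarrow> \<bar>G (p,y,e) - G (p,0,0)\<bar> < \<gamma>"
proof -
  obtain d where d: "d > 0" "\<And>x'. dist x' (p,0,0) < d \<Longrightarrow> dist (G x') (G (p,0,0)) < \<gamma>"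
    using cG assms(2) unfolding continuous_on_iff by (metis UNIV_I)
  show ?thesis
  proof (intro exI[of _ "d/2"] conjI allI impI)
    show "d/2 > 0" using d by simp
    fix y e :: real assume H: "\<bar>y\<bar> < d/2 \<and> \<bar>e\<bar> < d/2"
    have "dist (p, y, e) (p, 0, 0) = norm ((0, y, e) :: real \<times> real \<times> real)" by (simp add: dist_norm)
    also have "\<dots> \<le> \<bar>0\<bar> + \<bar>y\<bar> + \<bar>e\<bar>" by (rule norm3_le)
    also have "\<dots> < d" using H by simp
    finally show "\<bar>G (p,y,e) - G (p,0,0)\<bar> < \<gamma>" using d(2) by (simp add: dist_real_def)
  qed
qed

theorem lemma2p1:
  fixes f h :: "real \<times> real \<times> real \<Rightarrow> real" and a b :: real
  assumes "a < 0" and "0 < b"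
    and "smooth_on UNIV f" and "smooth_on UNIV h"
    and "\<forall>x\<in>{a..b} - {0}. x * h (x, 0, 0) < 0"
    and "\<exists>d < 0. ((\<lambda>x. h (x, 0, 0)) has_real_derivative d) (at 0)"
  shows "\<exists>\<epsilon>0 > 0. \<exists>U :: (real \<times> real) set. \<exists>\<Phi> :: real \<times> real \<times> real \<Rightarrow> real \<times> real.
     \<exists>K :: real \<times> real \<times> real \<Rightarrow> real.
     \<exists>f0 :: real \<times> real \<Rightarrow> real. \<exists>g0 :: real \<times> real \<times> real \<Rightarrow> real.
     \<exists>A :: (real \<times> real) set. \<exists>B :: (real \<times> real \<times> real) set.
       open U \<and> {a..b} \<times> {0} \<subseteq> U \<and>
       smooth_map_on {(x, y, e). (x, y) \<in> U \<and> e \<in> {-\<epsilon>0<..<\<epsilon>0}} \<Phi> \<and>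
       smooth_on {(x, y, e). (x, y) \<in> U \<and> e \<in> {-\<epsilon>0<..<\<epsilon>0}} K \<and>
       smooth_on A f0 \<and> smooth_on B g0 \<and> (0, 0, 0) \<in> B \<and> g0 (0, 0, 0) = 0 \<and>
       (\<forall>e\<in>{0..<\<epsilon>0}.
          diffeo_on U (\<lambda>(x, y). \<Phi> (x, y, e)) \<and>
          (\<forall>(x, y)\<in>U.
             K (x, y, e) > 0 \<and>
             (let (X, Y) = \<Phi> (x, y, e) in
               (X, e) \<in> A \<and> (X, Y, e) \<in> B \<and>
               (\<exists>D. ((\<lambda>(x', y'). \<Phi> (x', y', e)) has_derivative D) (at (x, y)) \<and>
                    D (e * f (x, y, e), y * h (x, y, e)) =
                      K (x, y, e) *\<^sub>R (e * f0 (X, e) + Y * g0 (X, Y, e), - X * Y)))))"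
proof -
  have hC: "Cinf UNIV h" and fC: "Cinf UNIV f" using assms(3,4) by (simp_all add: smooth_on_Cinf)
  obtain d where dd: "d < 0" "((\<lambda>x. h (x, 0, 0)) has_real_derivative d) (at 0)" using assms(6) by blast
  obtain N :: nat where N1: "N \<ge> 1"
    and Npos: "\<forall>x\<in>{a..b}. pdiff [(1,0,0)] (\<lambda>v. - h v * (1 + (fst v)\<^sup>2) ^ N) (x,0,0) > 0"
    using choose_N[OF hC assms(1,2,5) dd] by blast
  define Xf where "Xf = (\<lambda>v::real\<times>real\<times>real. - h v * (1 + (fst v)\<^sup>2) ^ N)"
  have XC: "Cinf UNIV Xf" unfolding Xf_def by (rule Xf_smooth[OF hC])
  have b1: "((1::real),(0::real),(0::real)) \<in> Basis" and b2: "((0::real),(1::real),(0::real)) \<in> Basis"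
    and b3: "((0::real),(0::real),(1::real)) \<in> Basis" by (auto simp: Basis_R3)
  define Xx where "Xx = pdiff [(1,0,0)] Xf"
  define Xy where "Xy = pdiff [(0,1,0)] Xf"
  define Xe where "Xe = pdiff [(0,0,1)] Xf"
  have XxC: "Cinf UNIV Xx" and XyC: "Cinf UNIV Xy" and XeC: "Cinf UNIV Xe"
    unfolding Xx_def Xy_def Xe_def using Cinf_pdiff[OF XC b1] Cinf_pdiff[OF XC b2] Cinf_pdiff[OF XC b3] by auto
  have contX: "continuous_on UNIV Xf" using Cinf_cont[OF XC] .
  obtain \<rho> where \<rho>: "\<rho> > 0" "\<And>x y e. a - \<rho> \<le> x \<Longrightarrow> x \<le> b + \<rho> \<Longrightarrow> \<bar>y\<bar> \<le> \<rho> \<Longrightarrow> \<bar>e\<bar> \<le> \<rho> \<Longrightarrow> Xx (x,y,e) > 0"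
    using choose_rho[OF Cinf_cont[OF XxC], of a b] Npos assms(1,2) unfolding Xx_def Xf_def by force
  define a' where "a' = a - \<rho>"
  define b' where "b' = b + \<rho>"
  define a1 where "a1 = a - \<rho>/2"
  define b1' where "b1' = b + \<rho>/2"
  have mono: "Xf (x, y, e) < Xf (x', y, e)" if "a' \<le> x" "x < x'" "x' \<le> b'" "\<bar>y\<bar> \<le> \<rho>" "\<bar>e\<bar> \<le> \<rho>" for x x' y e
    by (rule xmono[OF XC, of a' b']) (use that \<rho> in \<open>auto simp: a'_def b'_def Xx_def\<close>)
  define L0 L1 U1 U0 where "L0 = Xf (a', 0, 0)" and "L1 = Xf (a1, 0, 0)" and "U1 = Xf (b1', 0, 0)" and "U0 = Xf (b', 0, 0)"
  have ha: "h (a, 0, 0) > 0"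
  proof -
    have "a * h (a, 0, 0) < 0" using assms(1,2,5) by auto
    then show ?thesis using assms(1) by (simp add: mult_less_0_iff)
  qed
  have hb: "h (b, 0, 0) < 0"
  proof -
    have "b * h (b, 0, 0) < 0" using assms(1,2,5) by auto
    then show ?thesis using assms(2) by (simp add: mult_less_0_iff)
  qed
  have Xa: "Xf (a, 0, 0) < 0" unfolding Xf_def using ha by (simp add: add_pos_nonneg)
  have Xb: "Xf (b, 0, 0) > 0" unfolding Xf_def using hb by (simp add: add_pos_nonneg mult_neg_pos)
  have ord: "L0 < L1" "L1 < Xf (a, 0, 0)" "Xf (b, 0, 0) < U1" "U1 < U0"
    unfolding L0_def L1_def U1_def U0_def using assms(1,2) \<rho>(1)
    by (auto intro!: mono simp: a'_def b'_def a1_def b1'_def)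
  define \<gamma> where "\<gamma> = min (L1 - L0) (U0 - U1) / 3"
  have \<gamma>: "\<gamma> > 0" "3 * \<gamma> \<le> L1 - L0" "3 * \<gamma> \<le> U0 - U1" using ord by (auto simp: \<gamma>_def)
  obtain d1 where d1: "d1 > 0" "\<And>y e. \<bar>y\<bar> < d1 \<Longrightarrow> \<bar>e\<bar> < d1 \<Longrightarrow> \<bar>Xf (a',y,e) - L0\<bar> < \<gamma>"
    using cont_pt[OF contX \<gamma>(1), of a'] unfolding L0_def by blast
  obtain d2 where d2: "d2 > 0" "\<And>y e. \<bar>y\<bar> < d2 \<Longrightarrow> \<bar>e\<bar> < d2 \<Longrightarrow> \<bar>Xf (a1,y,e) - L1\<bar> < \<gamma>"
    using cont_pt[OF contX \<gamma>(1), of a1] unfolding L1_def by blast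
  obtain d3 where d3: "d3 > 0" "\<And>y e. \<bar>y\<bar> < d3 \<Longrightarrow> \<bar>e\<bar> < d3 \<Longrightarrow> \<bar>Xf (b1',y,e) - U1\<bar> < \<gamma>"
    using cont_pt[OF contX \<gamma>(1), of b1'] unfolding U1_def by blast
  obtain d4 where d4: "d4 > 0" "\<And>y e. \<bar>y\<bar> < d4 \<Longrightarrow> \<bar>e\<bar> < d4 \<Longrightarrow> \<bar>Xf (b',y,e) - U0\<bar> < \<gamma>"
    using cont_pt[OF contX \<gamma>(1), of b'] unfolding U0_def by blast
  define \<eta> where "\<eta> = min \<rho> (min (min d1 d2) (min d3 d4))"
  have \<eta>: "\<eta> > 0" "\<eta> \<le> \<rho>" "\<eta> \<le> d1" "\<eta> \<le> d2" "\<eta> \<le> d3" "\<eta> \<le> d4"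
    using \<rho> d1 d2 d3 d4 by (auto simp: \<eta>_def)
  define Xlo Xhi where "Xlo = L0 + \<gamma>" and "Xhi = U0 - \<gamma>"
  have lo: "Xf (a', y, e) < Xlo" if "\<bar>y\<bar> < \<eta>" "\<bar>e\<bar> < \<eta>" for y e
    using d1(2)[of y e] that \<eta> by (auto simp: Xlo_def)
  have hi: "Xhi < Xf (b', y, e)" if "\<bar>y\<bar> < \<eta>" "\<bar>e\<bar> < \<eta>" for y e
    using d4(2)[of y e] that \<eta> by (auto simp: Xhi_def)
  have lo1: "Xlo < Xf (a1, y, e)" if "\<bar>y\<bar> < \<eta>" "\<bar>e\<bar> < \<eta>" for y e
    using d2(2)[of y e] that \<eta> \<gamma> by (auto simp: Xlo_def)
  have hi1: "Xf (b1', y, e) < Xhi" if "\<bar>y\<bar> < \<eta>" "\<bar>e\<bar> < \<eta>" for y e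
    using d3(2)[of y e] that \<eta> \<gamma> by (auto simp: Xhi_def)
  define W where "W = {v::real\<times>real\<times>real. Xlo < fst v \<and> fst v < Xhi \<and> \<bar>fst (snd v)\<bar> < \<eta> \<and> \<bar>snd (snd v)\<bar> < \<eta>}"
  have oW: "open W" unfolding W_def
    by (intro open_Collect_conj open_Collect_less continuous_intros)
  obtain \<xi> where xiC: "Cinf W \<xi>"
    and xiP: "\<And>X Y e. (X, Y, e) \<in> W \<Longrightarrow> a' < \<xi> (X, Y, e) \<and> \<xi> (X, Y, e) < b' \<and> Xf (\<xi> (X, Y, e), Y, e) = X"
  proof (rule xi_construct[OF XC _ _ lo hi W_def])
    show "\<And>x y e. a' \<le> x \<Longrightarrow> x \<le> b' \<Longrightarrow> \<bar>y\<bar> \<le> \<eta> \<Longrightarrow> \<bar>e\<bar> \<le> \<eta> \<Longrightarrow> 0 < pdiff [(1, 0, 0)] Xf (x, y, e)"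
      using \<rho>(2) \<eta> unfolding Xx_def a'_def b'_def by force
    show "a' < b'" using assms(1,2) \<rho>(1) by (simp add: a'_def b'_def)
  qed auto
  have xiinv: "\<xi> (Xf (x, y, e), y, e) = x"
    if "a' < x" "x < b'" "\<bar>y\<bar> < \<eta>" "\<bar>e\<bar> < \<eta>" "(Xf (x, y, e), y, e) \<in> W" for x y e
  proof -
    define x2 where "x2 = \<xi> (Xf (x, y, e), y, e)"
    have x2: "a' < x2" "x2 < b'" "Xf (x2, y, e) = Xf (x, y, e)" using xiP[OF that(5)] by (auto simp: x2_def)
    have yr: "\<bar>y\<bar> \<le> \<rho>" "\<bar>e\<bar> \<le> \<rho>" using that \<eta> by auto
    show ?thesis
    proof (rule ccontr)
      assume "\<xi> (Xf (x, y, e), y, e) \<noteq> x"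
      then consider "x2 < x" | "x < x2" unfolding x2_def by linarith
      then show False
      proof cases
        case 1 then show False using mono[of x2 x y e] x2 that yr by auto
      next
        case 2 then show False using mono[of x x2 y e] x2 that yr by auto
      qed
    qed
  qed
  define U where "U = {z::real\<times>real. a1 < fst z \<and> fst z < b1' \<and> \<bar>snd z\<bar> < \<eta>}"
  have oU: "open U" unfolding U_def
    by (intro open_Collect_conj open_Collect_less continuous_intros)
  have xU: "a' < x \<and> x < b' \<and> a1 < x \<and> x < b1' \<and> \<bar>y\<bar> < \<eta>" if "(x, y) \<in> U" for x y
    using that \<rho>(1) by (auto simp: U_def a'_def b'_def a1_def b1'_def)
  have inW: "(Xf (x, y, e), y, e) \<in> W" if "(x, y) \<in> U" "\<bar>e\<bar> < \<eta>" for x y e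
  proof -
    have r: "a' < x" "x < b'" "a1 < x" "x < b1'" "\<bar>y\<bar> < \<eta>" using xU[OF that(1)] by auto
    have yr: "\<bar>y\<bar> \<le> \<rho>" "\<bar>e\<bar> \<le> \<rho>" using r that \<eta> by auto
    have "Xf (a1, y, e) < Xf (x, y, e)"
      by (rule mono) (use r yr \<rho>(1) in \<open>auto simp: a'_def a1_def\<close>)
    moreover have "Xf (x, y, e) < Xf (b1', y, e)"
      by (rule mono) (use r yr \<rho>(1) in \<open>auto simp: b'_def b1'_def\<close>)
    ultimately show ?thesis using lo1[OF r(5) that(2)] hi1[OF r(5) that(2)] r(5) that(2) by (auto simp: W_def)
  qed
  have xiU: "\<xi> (Xf (x, y, e), y, e) = x" if "(x, y) \<in> U" "\<bar>e\<bar> < \<eta>" for x y e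
    using xiinv[OF _ _ _ that(2) inW[OF that]] xU[OF that(1)] by auto
  define Dom3 where "Dom3 = {(x, y, e). (x, y) \<in> U \<and> e \<in> {-\<eta><..<\<eta>}}"
  have Dom3_eq: "Dom3 = {v. a1 < fst v \<and> fst v < b1' \<and> \<bar>fst (snd v)\<bar> < \<eta> \<and> - \<eta> < snd (snd v) \<and> snd (snd v) < \<eta>}"
    by (auto simp: Dom3_def U_def)
  have oDom: "open Dom3" unfolding Dom3_eq
    by (intro open_Collect_conj open_Collect_less continuous_intros)
  define \<Phi> where "\<Phi> = (\<lambda>v::real\<times>real\<times>real. (Xf v, fst (snd v)))"
  define p where "p = (\<lambda>x::real. (1 + x\<^sup>2) ^ N)"
  have ppos: "p x > 0" for x unfolding p_def by (simp add: add_pos_nonneg)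
  have pC: "Cinf S (\<lambda>v::real\<times>real\<times>real. p (fst v))" if "open S" for S
    unfolding p_def by (intro Cinf_power Cinf_add Cinf_const Cinf_fst3 that)
  define K where "K = (\<lambda>v::real\<times>real\<times>real. inverse (p (fst v)))"
  define A1 where "A1 = (\<lambda>v. p (fst v) * Xx v * f v)"
  define A2 where "A2 = (\<lambda>v. p (fst v) * Xy v * h v)"
  have A1C: "Cinf UNIV A1" unfolding A1_def by (intro Cinf_mult pC XxC fC) auto
  have A2C: "Cinf UNIV A2" unfolding A2_def by (intro Cinf_mult pC XyC hC) auto
  define B1 where "B1 = (\<lambda>w. A1 (\<xi> w, fst (snd w), snd (snd w)))"
  define B2 where "B2 = (\<lambda>w. A2 (\<xi> w, fst (snd w), snd (snd w)))"
  have B1C: "Cinf W B1" unfolding B1_def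
    by (rule Cinf_comp3[OF A1C xiC Cinf_snd3[OF oW] Cinf_thd3[OF oW]]) auto
  have B2C: "Cinf W B2" unfolding B2_def
    by (rule Cinf_comp3[OF A2C xiC Cinf_snd3[OF oW] Cinf_thd3[OF oW]]) auto
  have seg: "(X, t * Y, e) \<in> W" if "(X, Y, e) \<in> W" "t \<in> {0..1}" for X Y e t
  proof -
    have "\<bar>t * Y\<bar> \<le> \<bar>Y\<bar>" using that(2) by (auto simp: abs_mult intro: mult_left_le_one_le)
    then show ?thesis using that(1) by (auto simp: W_def)
  qed
  define Q where "Q = (\<lambda>v. integral {0..1} (\<lambda>t. pdiff [(0,1,0)] B1 (fst v, t * fst (snd v), snd (snd v))))"
  have QC: "Cinf W Q" and Qid: "\<And>X Y e. (X,Y,e) \<in> W \<Longrightarrow> B1 (X,Y,e) = B1 (X,0,e) + Y * Q (X,Y,e)"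
    using hadamard_Y[OF B1C seg] unfolding Q_def by auto
  define f0 where "f0 = (\<lambda>z::real\<times>real. B1 (fst z, 0, snd z))"
  define g0 where "g0 = (\<lambda>w. B2 w + snd (snd w) * Q w)"
  define A where "A = {z::real\<times>real. (fst z, 0, snd z) \<in> W}"
  have oA: "open A"
  proof -
    have "A = (\<lambda>z::real\<times>real. (fst z, 0::real, snd z)) -` W" by (auto simp: A_def)
    also have "open \<dots>" by (rule open_vimage[OF oW]) (auto intro!: continuous_intros)
    finally show ?thesis .
  qed
  have f0C: "Cinf A f0" unfolding f0_def
    by (rule Cinf_comp3[OF B1C Cinf_fst2[OF oA] Cinf_const[OF oA] Cinf_snd2[OF oA]]) (auto simp: A_def)
  have g0C: "Cinf W g0" unfolding g0_def
    by (intro Cinf_add B2C Cinf_mult Cinf_thd3 oW QC)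
  have W0: "(0, 0, 0) \<in> W"
    using ord \<gamma> Xa Xb \<eta>(1) by (auto simp: W_def Xlo_def Xhi_def)
  have g00: "g0 (0, 0, 0) = 0"
  proof -
    define x0 where "x0 = \<xi> (0, 0, 0)"
    have "Xf (x0, 0, 0) = 0" using xiP[OF W0] by (simp add: x0_def)
    moreover have "(1::real) + x0\<^sup>2 \<noteq> 0" by (metis add_pos_nonneg zero_le_power2 zero_less_one less_irrefl)
    ultimately have "h (x0, 0, 0) = 0" unfolding Xf_def by simp
    then show ?thesis by (simp add: g0_def B2_def A2_def x0_def)
  qed
  have main: "open U \<and> {a..b} \<times> {0} \<subseteq> U \<and>
       smooth_map_on {(x, y, e). (x, y) \<in> U \<and> e \<in> {-\<eta><..<\<eta>}} \<Phi> \<and>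
       smooth_on {(x, y, e). (x, y) \<in> U \<and> e \<in> {-\<eta><..<\<eta>}} K \<and>
       smooth_on A f0 \<and> smooth_on W g0 \<and> (0, 0, 0) \<in> W \<and> g0 (0, 0, 0) = 0 \<and>
       (\<forall>e\<in>{0..<\<eta>}.
          diffeo_on U (\<lambda>(x, y). \<Phi> (x, y, e)) \<and>
          (\<forall>(x, y)\<in>U.
             K (x, y, e) > 0 \<and>
             (let (X, Y) = \<Phi> (x, y, e) in
               (X, e) \<in> A \<and> (X, Y, e) \<in> W \<and>
               (\<exists>D. ((\<lambda>(x', y'). \<Phi> (x', y', e)) has_derivative D) (at (x, y)) \<and>
                    D (e * f (x, y, e), y * h (x, y, e)) =
                      K (x, y, e) *\<^sub>R (e * f0 (X, e) + Y * g0 (X, Y, e), - X * Y)))))"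
  proof (intro conjI)
    show "open U" by (rule oU)
    show "{a..b} \<times> {0} \<subseteq> U" using \<eta>(1) \<rho>(1) by (auto simp: U_def a1_def b1'_def)
    show "smooth_map_on {(x, y, e). (x, y) \<in> U \<and> e \<in> {-\<eta><..<\<eta>}} \<Phi>"
      unfolding smooth_map_on_def smooth_on_Cinf Dom3_def[symmetric]
    proof
      fix i :: "real \<times> real" assume "i \<in> Basis"
      then consider "i = (1,0)" | "i = (0,1)" by (auto simp: Basis_R2)
      then show "Cinf Dom3 (\<lambda>x. \<Phi> x \<bullet> i)"
      proof cases
        case 1
        have "Cinf Dom3 Xf" using Cinf_subset[OF XC _ oDom] by simp
        then show ?thesis by (rule Cinf_cong) (simp add: 1 \<Phi>_def)
      next
        case 2
        show ?thesis by (rule Cinf_cong[OF Cinf_snd3[OF oDom]]) (simp add: 2 \<Phi>_def)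
      qed
    qed
    show "smooth_on {(x, y, e). (x, y) \<in> U \<and> e \<in> {-\<eta><..<\<eta>}} K"
      unfolding smooth_on_Cinf Dom3_def[symmetric] K_def
      by (rule Cinf_inverse[OF pC[OF oDom]]) (use ppos in \<open>auto simp: less_imp_neq[symmetric]\<close>)
    show "smooth_on A f0" using f0C by (simp add: smooth_on_Cinf)
    show "smooth_on W g0" using g0C by (simp add: smooth_on_Cinf)
    show "(0, 0, 0) \<in> W" by (rule W0)
    show "g0 (0, 0, 0) = 0" by (rule g00)
    show "\<forall>e\<in>{0..<\<eta>}.
          diffeo_on U (\<lambda>(x, y). \<Phi> (x, y, e)) \<and>
          (\<forall>(x, y)\<in>U.
             K (x, y, e) > 0 \<and>
             (let (X, Y) = \<Phi> (x, y, e) in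
               (X, e) \<in> A \<and> (X, Y, e) \<in> W \<and>
               (\<exists>D. ((\<lambda>(x', y'). \<Phi> (x', y', e)) has_derivative D) (at (x, y)) \<and>
                    D (e * f (x, y, e), y * h (x, y, e)) =
                      K (x, y, e) *\<^sub>R (e * f0 (X, e) + Y * g0 (X, Y, e), - X * Y))))"
    proof
      fix e assume e: "e \<in> {0..<\<eta>}"
      have ae: "\<bar>e\<bar> < \<eta>" using e by auto
      define \<Phi>e where "\<Phi>e = (\<lambda>(x, y). \<Phi> (x, y, e))"
      have \<Phi>e_eq: "\<Phi>e z = (Xf (fst z, snd z, e), snd z)" for z
        by (simp add: \<Phi>e_def \<Phi>_def case_prod_unfold)
      have injU: "inj_on \<Phi>e U"
      proof (rule inj_onI)
        fix z z' assume z: "z \<in> U" and z': "z' \<in> U" and eq: "\<Phi>e z = \<Phi>e z'"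
        obtain x y where zz: "z = (x, y)" by (cases z) auto
        obtain x' y' where zz': "z' = (x', y')" by (cases z') auto
        have yy: "y' = y" and XX: "Xf (x, y, e) = Xf (x', y, e)" using eq by (auto simp: \<Phi>e_eq zz zz')
        have "x = \<xi> (Xf (x, y, e), y, e)" using xiU[of x y e] z ae zz by simp
        also have "\<dots> = \<xi> (Xf (x', y, e), y, e)" using XX by simp
        also have "\<dots> = x'" using xiU[of x' y e] z' ae zz' yy by simp
        finally have "x = x'" .
        then show "z = z'" using zz zz' yy by simp
      qed
      have contPe: "continuous_on U \<Phi>e"
      proof -
        have "continuous_on U (\<lambda>z. Xf (fst z, snd z, e))"
          by (rule continuous_on_compose2[OF contX]) (auto intro!: continuous_intros)
        then have "continuous_on U (\<lambda>z. (Xf (fst z, snd z, e), snd z))"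
          by (intro continuous_on_Pair continuous_on_snd continuous_on_id)
        moreover have "\<Phi>e = (\<lambda>z. (Xf (fst z, snd z, e), snd z))" using \<Phi>e_eq by blast
        ultimately show ?thesis by simp
      qed
      have oIm: "open (\<Phi>e ` U)" by (rule invariance_of_domain[OF contPe oU injU])
      have ImW: "(fst w, snd w, e) \<in> W" if wU: "w \<in> \<Phi>e ` U" for w
      proof -
        obtain z where z: "z \<in> U" "w = \<Phi>e z" using wU by blast
        obtain x y where zz: "z = (x, y)" by (cases z) auto
        show ?thesis using inW[of x y e] z ae zz by (simp add: \<Phi>e_eq)
      qed
      have invform: "inv_into U \<Phi>e w = (\<xi> (fst w, snd w, e), snd w)" if wU: "w \<in> \<Phi>e ` U" for w
      proof -
        obtain z where z: "z \<in> U" "w = \<Phi>e z" using wU by blast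
        obtain x y where zz: "z = (x, y)" by (cases z) auto
        have "inv_into U \<Phi>e w = z" using inv_into_f_f[OF injU z(1)] z(2) by simp
        moreover have "\<xi> (fst w, snd w, e) = x" using xiU[of x y e] z ae by (simp add: zz \<Phi>e_eq)
        ultimately show ?thesis using z zz by (simp add: \<Phi>e_eq)
      qed
      have diffeo: "diffeo_on U \<Phi>e"
        unfolding diffeo_on_def
      proof (intro conjI oU injU oIm)
        show "smooth_map_on U \<Phi>e" unfolding smooth_map_on_def smooth_on_Cinf
        proof
          fix i :: "real \<times> real" assume "i \<in> Basis"
          then consider "i = (1,0)" | "i = (0,1)" by (auto simp: Basis_R2)
          then show "Cinf U (\<lambda>x. \<Phi>e x \<bullet> i)"
          proof cases
            case 1
            have "Cinf U (\<lambda>z. Xf (fst z, snd z, e))"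
              by (rule Cinf_comp3[OF XC Cinf_fst2[OF oU] Cinf_snd2[OF oU] Cinf_const[OF oU]]) auto
            then show ?thesis by (rule Cinf_cong) (simp add: 1 \<Phi>e_eq)
          next
            case 2
            show ?thesis by (rule Cinf_cong[OF Cinf_snd2[OF oU]]) (simp add: 2 \<Phi>e_eq)
          qed
        qed
        show "smooth_map_on (\<Phi>e ` U) (inv_into U \<Phi>e)" unfolding smooth_map_on_def smooth_on_Cinf
        proof
          fix i :: "real \<times> real" assume "i \<in> Basis"
          then consider "i = (1,0)" | "i = (0,1)" by (auto simp: Basis_R2)
          then show "Cinf (\<Phi>e ` U) (\<lambda>x. inv_into U \<Phi>e x \<bullet> i)"
          proof cases
            case 1
            have "Cinf (\<Phi>e ` U) (\<lambda>w. \<xi> (fst w, snd w, e))"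
              by (rule Cinf_comp3[OF xiC Cinf_fst2[OF oIm] Cinf_snd2[OF oIm] Cinf_const[OF oIm]]) (rule ImW)
            then show ?thesis by (rule Cinf_cong) (simp add: 1 invform)
          next
            case 2
            show ?thesis by (rule Cinf_cong[OF Cinf_snd2[OF oIm]]) (simp add: 2 invform)
          qed
        qed
      qed
      show "diffeo_on U (\<lambda>(x, y). \<Phi> (x, y, e)) \<and>
          (\<forall>(x, y)\<in>U.
             K (x, y, e) > 0 \<and>
             (let (X, Y) = \<Phi> (x, y, e) in
               (X, e) \<in> A \<and> (X, Y, e) \<in> W \<and>
               (\<exists>D. ((\<lambda>(x', y'). \<Phi> (x', y', e)) has_derivative D) (at (x, y)) \<and>
                    D (e * f (x, y, e), y * h (x, y, e)) =
                      K (x, y, e) *\<^sub>R (e * f0 (X, e) + Y * g0 (X, Y, e), - X * Y))))"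
      proof -
        have Pxy: "K (x, y, e) > 0 \<and>
             (let (X, Y) = \<Phi> (x, y, e) in
               (X, e) \<in> A \<and> (X, Y, e) \<in> W \<and>
               (\<exists>D. ((\<lambda>(x', y'). \<Phi> (x', y', e)) has_derivative D) (at (x, y)) \<and>
                    D (e * f (x, y, e), y * h (x, y, e)) =
                      K (x, y, e) *\<^sub>R (e * f0 (X, e) + Y * g0 (X, Y, e), - X * Y)))"
          if xyU: "(x, y) \<in> U" for x y
        proof -
        define X where "X = Xf (x, y, e)"
        have XW: "(X, y, e) \<in> W" using inW[OF xyU ae] by (simp add: X_def)
        have XA: "(X, e) \<in> A" using XW \<eta>(1) by (auto simp: A_def W_def)
        have xiX: "\<xi> (X, y, e) = x" using xiU[OF xyU ae] by (simp add: X_def)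
        have f0v: "f0 (X, e) = A1 (x, y, e) - y * Q (X, y, e)"
          using Qid[OF XW] xiX by (simp add: f0_def B1_def)
        have g0v: "g0 (X, y, e) = A2 (x, y, e) + e * Q (X, y, e)"
          using xiX by (simp add: g0_def B2_def)
        define D where "D = (\<lambda>u::real\<times>real. (fst u * Xx (x, y, e) + snd u * Xy (x, y, e), snd u))"
        have dXf: "(Xf has_derivative (\<lambda>u. fst u * Xx (x,y,e) + fst (snd u) * Xy (x,y,e) + snd (snd u) * Xe (x,y,e))) (at (x, y, e))"
          using Cinf_frechet[OF XC, of "(x,y,e)"] by (simp add: sum_R3 Xx_def Xy_def Xe_def inner_prod_def)
        have dm: "((\<lambda>u::real\<times>real. (fst u, snd u, e)) has_derivative (\<lambda>u. (fst u, snd u, 0))) (at (x, y))"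
          by (auto intro!: derivative_eq_intros)
        have "((Xf \<circ> (\<lambda>u::real\<times>real. (fst u, snd u, e))) has_derivative
             ((\<lambda>u. fst u * Xx (x,y,e) + fst (snd u) * Xy (x,y,e) + snd (snd u) * Xe (x,y,e)) \<circ> (\<lambda>u. (fst u, snd u, 0)))) (at (x, y))"
          by (rule diff_chain_at[OF dm]) (simp add: dXf)
        then have d1: "((\<lambda>u::real\<times>real. Xf (fst u, snd u, e)) has_derivative (\<lambda>u. fst u * Xx (x,y,e) + snd u * Xy (x,y,e))) (at (x, y))"
          by (simp add: o_def)
        have dPhi: "((\<lambda>(x', y'). \<Phi> (x', y', e)) has_derivative D) (at (x, y))"
        proof -
          have "((\<lambda>u::real\<times>real. (Xf (fst u, snd u, e), snd u)) has_derivative D) (at (x, y))"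
            unfolding D_def by (intro has_derivative_Pair d1 has_derivative_snd has_derivative_ident)
          moreover have "(\<lambda>(x', y'). \<Phi> (x', y', e)) = (\<lambda>u::real\<times>real. (Xf (fst u, snd u, e), snd u))"
            by (auto simp: \<Phi>_def fun_eq_iff)
          ultimately show ?thesis by simp
        qed
        have pp: "p x > 0" by (rule ppos)
        have Xval: "X = - h (x, y, e) * p x" by (simp add: X_def Xf_def p_def)
        have eqn: "D (e * f (x, y, e), y * h (x, y, e)) =
            K (x, y, e) *\<^sub>R (e * f0 (X, e) + y * g0 (X, y, e), - X * y)"
        proof -
          have pne: "p x \<noteq> 0" using pp by simp
          have s1: "e * f0 (X, e) + y * g0 (X, y, e) = p x * (e * f (x, y, e) * Xx (x, y, e) + y * h (x, y, e) * Xy (x, y, e))"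
            unfolding f0v g0v A1_def A2_def by (simp add: algebra_simps)
          have s2: "- X * y = p x * (y * h (x, y, e))" unfolding Xval by (simp add: algebra_simps)
          have inv: "p x * (inverse (p x) * z) = z" for z using pne by (simp add: mult.assoc[symmetric])
          show ?thesis unfolding D_def K_def s1 s2 using pne
            by (simp add: algebra_simps inv)
        qed
        show "K (x, y, e) > 0 \<and>
             (let (X, Y) = \<Phi> (x, y, e) in
               (X, e) \<in> A \<and> (X, Y, e) \<in> W \<and>
               (\<exists>D. ((\<lambda>(x', y'). \<Phi> (x', y', e)) has_derivative D) (at (x, y)) \<and>
                    D (e * f (x, y, e), y * h (x, y, e)) =
                      K (x, y, e) *\<^sub>R (e * f0 (X, e) + Y * g0 (X, Y, e), - X * Y)))"
        proof -
          have \<Phi>xy: "\<Phi> (x, y, e) = (X, y)" by (simp add: \<Phi>_def X_def)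
          have ex: "\<exists>D. ((\<lambda>(x', y'). \<Phi> (x', y', e)) has_derivative D) (at (x, y)) \<and>
                    D (e * f (x, y, e), y * h (x, y, e)) =
                      K (x, y, e) *\<^sub>R (e * f0 (X, e) + y * g0 (X, y, e), - X * y)"
            using dPhi eqn by blast
          have Kp: "K (x, y, e) > 0" using pp by (simp add: K_def)
          show ?thesis using Kp XA XW ex by (simp add: \<Phi>xy)
        qed
        qed
        have "diffeo_on U (\<lambda>(x, y). \<Phi> (x, y, e))" using diffeo by (simp add: \<Phi>e_def)
        then show ?thesis using Pxy by blast
      qed
    qed
  qed
  show ?thesis using \<eta>(1) main by blast
qed

end
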